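(* Let $p$ be a prime, $S$ a finite non-abelian simple group, $G$ the universal $p'$-covering group of $S$, $\chi\in\mathrm{Irr}(G)$, and $\bar G:=G/(\ker\chi\cap Z(G))$. Then there exists a finite group $A$ such that: (a) $A$ contains $\bar G$ as a normal subgroup, the conjugation action induces an isomorphism $A/C_A(\bar G)\cong\mathrm{Aut}(G)_\chi$, and $C_A(\bar G)=Z(A)$; (b) the character $\bar\chi\in\mathrm{Irr}(\bar G)$ whose inflation to $G$ is $\chi$ extends to $A$.
   Context: Universal $p'$-covering group of $S$: $Y/Z(Y)_p$, where $Y$ is the universal covering group of $S$ (perfect, $Y/Z(Y)\cong S$, $|Z(Y)|$ maximal) and $Z(Y)_p$ the Sylow $p$-subgroup of $Z(Y)$. $\mathrm{Aut}(G)_\chi$ is the stabilizer of $\chi$ in $\mathrm{Aut}(G)$; its elements stabilize $\ker\chi\cap Z(G)$ and thus act on $\bar G$. *)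

theory Defs
  imports "HOL-Algebra.Group" "HOL-Algebra.Coset" "HOL-Algebra.Bij"
    "HOL-Algebra.SimpleGroups" "HOL-Algebra.Generated_Groups"
    "Jordan_Normal_Form.Matrix"
begin

definition grp_center :: "('a, 'b) monoid_scheme \<Rightarrow> 'a set" where
  "grp_center G = {z \<in> carrier G. \<forall>g \<in> carrier G. z \<otimes>\<^bsub>G\<^esub> g = g \<otimes>\<^bsub>G\<^esub> z}"

definition grp_centralizer :: "('a, 'b) monoid_scheme \<Rightarrow> 'a set \<Rightarrow> 'a set" where
  "grp_centralizer G H = {a \<in> carrier G. \<forall>h \<in> H. a \<otimes>\<^bsub>G\<^esub> h = h \<otimes>\<^bsub>G\<^esub> a}"

definition perfect_group :: "('a, 'b) monoid_scheme \<Rightarrow> bool" where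
  "perfect_group G \<longleftrightarrow> group G \<and> derived G (carrier G) = carrier G"

text \<open>Sylow p-subgroup of the (abelian) centre: its p-elements.\<close>
definition center_p_part :: "nat \<Rightarrow> ('a, 'b) monoid_scheme \<Rightarrow> 'a set" where
  "center_p_part p Y = {z \<in> grp_center Y. \<exists>k::nat. z [^]\<^bsub>Y\<^esub> (p ^ k) = \<one>\<^bsub>Y\<^esub>}"

text \<open>Universal covering group: perfect, Y/Z(Y) isomorphic to S, |Z(Y)| maximal.
  Competitors range over groups with carrier in nat, which (up to isomorphism)
  covers all finite groups.\<close>
definition universal_covering_group ::
  "('b, 'x) monoid_scheme \<Rightarrow> ('s, 'y) monoid_scheme \<Rightarrow> bool" where
  "universal_covering_group Y S \<longleftrightarrow>
     perfect_group Y \<and> finite (carrier Y) \<and> (Y Mod grp_center Y) \<cong> S \<and>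
     (\<forall>Y' :: nat monoid. perfect_group Y' \<and> (Y' Mod grp_center Y') \<cong> S \<longrightarrow>
        card (grp_center Y') \<le> card (grp_center Y))"

definition universal_p'_covering_group ::
  "nat \<Rightarrow> ('a, 'z) monoid_scheme \<Rightarrow> ('s, 'y) monoid_scheme \<Rightarrow> bool" where
  "universal_p'_covering_group p G S \<longleftrightarrow>
     (\<exists>Y :: nat monoid. universal_covering_group Y S \<and>
        G \<cong> (Y Mod center_p_part p Y))"

definition mat_trace :: "complex mat \<Rightarrow> complex" where
  "mat_trace M = (\<Sum>i < dim_row M. M $$ (i, i))"

definition representation ::
  "('a, 'b) monoid_scheme \<Rightarrow> nat \<Rightarrow> ('a \<Rightarrow> complex mat) \<Rightarrow> bool" where
  "representation G n \<rho> \<longleftrightarrow>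
     (\<forall>g \<in> carrier G. \<rho> g \<in> carrier_mat n n) \<and>
     \<rho> \<one>\<^bsub>G\<^esub> = 1\<^sub>m n \<and>
     (\<forall>g \<in> carrier G. \<forall>h \<in> carrier G. \<rho> (g \<otimes>\<^bsub>G\<^esub> h) = \<rho> g * \<rho> h)"

definition vec_subspace :: "nat \<Rightarrow> complex vec set \<Rightarrow> bool" where
  "vec_subspace n W \<longleftrightarrow> W \<subseteq> carrier_vec n \<and> 0\<^sub>v n \<in> W \<and>
     (\<forall>v \<in> W. \<forall>w \<in> W. v + w \<in> W) \<and> (\<forall>c. \<forall>v \<in> W. c \<cdot>\<^sub>v v \<in> W)"

definition irreducible_rep ::
  "('a, 'b) monoid_scheme \<Rightarrow> nat \<Rightarrow> ('a \<Rightarrow> complex mat) \<Rightarrow> bool" where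
  "irreducible_rep G n \<rho> \<longleftrightarrow> representation G n \<rho> \<and> n > 0 \<and>
     (\<forall>W. vec_subspace n W \<and> (\<forall>g \<in> carrier G. \<forall>w \<in> W. \<rho> g *\<^sub>v w \<in> W)
        \<longrightarrow> W = {0\<^sub>v n} \<or> W = carrier_vec n)"

definition irr_char :: "('a, 'b) monoid_scheme \<Rightarrow> ('a \<Rightarrow> complex) \<Rightarrow> bool" where
  "irr_char G \<chi> \<longleftrightarrow> (\<exists>n \<rho>. irreducible_rep G n \<rho> \<and>
     (\<forall>g \<in> carrier G. \<chi> g = mat_trace (\<rho> g)))"

definition char_kernel :: "('a, 'b) monoid_scheme \<Rightarrow> ('a \<Rightarrow> complex) \<Rightarrow> 'a set" where
  "char_kernel G \<chi> = {g \<in> carrier G. \<chi> g = \<chi> \<one>\<^bsub>G\<^esub>}"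

definition aut_stab :: "('a, 'b) monoid_scheme \<Rightarrow> ('a \<Rightarrow> complex) \<Rightarrow> ('a \<Rightarrow> 'a) monoid" where
  "aut_stab G \<chi> = (AutoGroup G)\<lparr>carrier :=
     {\<alpha> \<in> auto G. \<forall>g \<in> carrier G. \<chi> (\<alpha> g) = \<chi> g}\<rparr>"

end

theory Submission
  imports Defs "HOL-Algebra.Multiplicative_Group" "Jordan_Normal_Form.Spectral_Radius"
begin

lemma mat_entry_via_unit:
  assumes "(M::complex mat) \<in> carrier_mat n n" "i < n" "j < n"
  shows "M $$ (i,j) = (M *\<^sub>v unit_vec n j) $ i"
proof -
  have "row M i \<in> carrier_vec n" using assms by auto
  then show ?thesis using assms by (subst index_mult_mat_vec) (auto simp: carrier_matD)
qed

lemma mult_entry: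
  assumes "A \<in> carrier_mat n n" "B \<in> carrier_mat n n" "i < n" "j < n"
  shows "(A * B) $$ (i,j) = (\<Sum>k<n. A $$ (i,k) * B $$ (k,j))"
  using assms by (auto simp: scalar_prod_def atLeast0LessThan intro!: sum.cong)

lemma mat_eq_by_vec:
  assumes M: "M \<in> carrier_mat n n" and "\<And>v. v \<in> carrier_vec n \<Longrightarrow> M *\<^sub>v v = (c::complex) \<cdot>\<^sub>v v"
  shows "M = c \<cdot>\<^sub>m 1\<^sub>m n"
proof (rule eq_matI)
  fix i j assume ij: "i < dim_row (c \<cdot>\<^sub>m 1\<^sub>m n)" "j < dim_col (c \<cdot>\<^sub>m 1\<^sub>m n)"
  hence "i < n" "j < n" by auto
  then have "M $$ (i,j) = (c \<cdot>\<^sub>v unit_vec n j) $ i"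
    using mat_entry_via_unit[OF M] assms(2)[of "unit_vec n j"] by simp
  then show "M $$ (i,j) = (c \<cdot>\<^sub>m 1\<^sub>m n) $$ (i,j)" using \<open>i<n\<close> \<open>j<n\<close> by auto
qed (use M in auto)

lemma mat_zero_by_vec:
  assumes M: "M \<in> carrier_mat n n" and "\<And>v. v \<in> carrier_vec n \<Longrightarrow> M *\<^sub>v v = 0\<^sub>v n"
  shows "M = (0::complex) \<cdot>\<^sub>m 1\<^sub>m n"
  by (rule mat_eq_by_vec[OF M]) (use assms(2) in auto)

lemma det_nz_inverse:
  assumes A: "(A::complex mat) \<in> carrier_mat n n" and "det A \<noteq> 0"
  shows "\<exists>B \<in> carrier_mat n n. A * B = 1\<^sub>m n \<and> B * A = 1\<^sub>m n"
  using det_non_zero_imp_unit[OF assms, of "()"]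
  unfolding Units_def ring_mat_def by auto

definition mat_tr :: "complex mat \<Rightarrow> complex" where
  "mat_tr M = (\<Sum>i < dim_row M. M $$ (i, i))"

lemma mat_trace_eq: "mat_trace = mat_tr"
  unfolding mat_trace_def mat_tr_def by (rule ext) simp

lemma trace_comm:
  assumes "A \<in> carrier_mat n n" "B \<in> carrier_mat n n"
  shows "mat_trace (A * B) = mat_trace (B * A)"
proof -
  have "mat_trace (A * B) = (\<Sum>i<n. \<Sum>k<n. A $$ (i,k) * B $$ (k,i))"
    using assms unfolding mat_trace_def
    by (intro sum.cong) (auto simp: scalar_prod_def atLeast0LessThan)
  also have "\<dots> = (\<Sum>k<n. \<Sum>i<n. B $$ (k,i) * A $$ (i,k))"
    by (subst sum.swap) (simp add: mult.commute)
  also have "\<dots> = mat_trace (B * A)"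
    using assms unfolding mat_trace_def
    by (intro sum.cong) (auto simp: scalar_prod_def atLeast0LessThan)
  finally show ?thesis .
qed

lemma trace_smult_one: "mat_trace (c \<cdot>\<^sub>m 1\<^sub>m n) = c * of_nat n"
  unfolding mat_trace_def by simp

lemma trace_one: "mat_trace (1\<^sub>m n) = of_nat n"
  unfolding mat_trace_def by simp

definition msum :: "nat \<Rightarrow> ('x \<Rightarrow> complex mat) \<Rightarrow> 'x set \<Rightarrow> complex mat" where
  "msum n f I = mat n n (\<lambda>(i,j). \<Sum>x\<in>I. f x $$ (i,j))"

lemma msum_carrier[simp]: "msum n f I \<in> carrier_mat n n"
  unfolding msum_def by simp

lemma msum_dim[simp]: "dim_row (msum n f I) = n" "dim_col (msum n f I) = n"
  unfolding msum_def by simp_all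

lemma msum_index: "i < n \<Longrightarrow> j < n \<Longrightarrow> msum n f I $$ (i,j) = (\<Sum>x\<in>I. f x $$ (i,j))"
  unfolding msum_def by simp

lemma msum_mult_left:
  assumes A: "A \<in> carrier_mat n n" and f: "\<And>x. x \<in> I \<Longrightarrow> f x \<in> carrier_mat n n"
  shows "A * msum n f I = msum n (\<lambda>x. A * f x) I"
proof (rule eq_matI)
  fix i j assume "i < dim_row (msum n (\<lambda>x. A * f x) I)" "j < dim_col (msum n (\<lambda>x. A * f x) I)"
  hence ij: "i < n" "j < n" by auto
  have "(A * msum n f I) $$ (i,j) = (\<Sum>k<n. A $$ (i,k) * (\<Sum>x\<in>I. f x $$ (k,j)))"
    using A ij by (auto simp: scalar_prod_def msum_index atLeast0LessThan intro!: sum.cong)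
  also have "\<dots> = (\<Sum>x\<in>I. \<Sum>k<n. A $$ (i,k) * f x $$ (k,j))"
    by (simp add: sum_distrib_left sum.swap[of _ I])
  also have "\<dots> = msum n (\<lambda>x. A * f x) I $$ (i,j)"
    using A ij f by (auto simp: msum_index mult_entry intro!: sum.cong)
  finally show "(A * msum n f I) $$ (i,j) = msum n (\<lambda>x. A * f x) I $$ (i,j)" .
qed (use A in auto)

lemma msum_mult_right:
  assumes A: "A \<in> carrier_mat n n" and f: "\<And>x. x \<in> I \<Longrightarrow> f x \<in> carrier_mat n n"
  shows "msum n f I * A = msum n (\<lambda>x. f x * A) I"
proof (rule eq_matI)
  fix i j assume "i < dim_row (msum n (\<lambda>x. f x * A) I)" "j < dim_col (msum n (\<lambda>x. f x * A) I)"
  hence ij: "i < n" "j < n" by auto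
  have "(msum n f I * A) $$ (i,j) = (\<Sum>k<n. (\<Sum>x\<in>I. f x $$ (i,k)) * A $$ (k,j))"
    using A ij by (auto simp: scalar_prod_def msum_index atLeast0LessThan intro!: sum.cong)
  also have "\<dots> = (\<Sum>x\<in>I. \<Sum>k<n. f x $$ (i,k) * A $$ (k,j))"
    by (simp add: sum_distrib_right sum.swap[of _ I])
  also have "\<dots> = msum n (\<lambda>x. f x * A) I $$ (i,j)"
    unfolding msum_index[OF ij] by (intro sum.cong refl, subst mult_entry[OF f]) (use A ij in auto)
  finally show "(msum n f I * A) $$ (i,j) = msum n (\<lambda>x. f x * A) I $$ (i,j)" .
qed (use A in auto)

lemma msum_reindex:
  assumes "bij_betw h J I"
  shows "msum n f I = msum n (\<lambda>x. f (h x)) J"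
proof -
  have "(\<Sum>x\<in>J. f (h x) $$ ij) = (\<Sum>x\<in>I. f x $$ ij)" for ij
    using sum.reindex_bij_betw[OF assms, of "\<lambda>x. f x $$ ij"] by simp
  then show ?thesis unfolding msum_def by simp
qed

lemma msum_cong:
  "(\<And>x. x \<in> I \<Longrightarrow> f x = g x) \<Longrightarrow> msum n f I = msum n g I"
  unfolding msum_def by (intro cong_mat refl) (auto intro!: sum.cong)

lemma trace_msum: assumes "\<And>x. x \<in> I \<Longrightarrow> f x \<in> carrier_mat n n"
  shows "mat_trace (msum n f I) = (\<Sum>x\<in>I. mat_trace (f x))"
  unfolding mat_trace_def msum_def using assms by (auto simp: sum.swap[of _ I] intro!: sum.cong)


lemma mat_vec_zero: "(A::complex mat) \<in> carrier_mat n n \<Longrightarrow> A *\<^sub>v 0\<^sub>v n = 0\<^sub>v n"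
  by (intro eq_vecI) auto

lemma smult_zero_vec': "(c::complex) \<cdot>\<^sub>v 0\<^sub>v n = 0\<^sub>v n"
  by (intro eq_vecI) auto

lemma one_smult_one[simp]: "(1::complex) \<cdot>\<^sub>m 1\<^sub>m n = 1\<^sub>m n"
  by (intro eq_matI) auto

lemma zero_smult_one: "(0::complex) \<cdot>\<^sub>m 1\<^sub>m n = 0\<^sub>m n n"
  by (intro eq_matI) auto

locale irrep = group G for G (structure) +
  fixes n :: nat and \<rho> :: "'a \<Rightarrow> complex mat" and \<chi> :: "'a \<Rightarrow> complex"
  assumes irr: "irreducible_rep G n \<rho>"
    and chi: "\<And>g. g \<in> carrier G \<Longrightarrow> \<chi> g = mat_trace (\<rho> g)"
    and fin: "finite (carrier G)"
begin

lemma rho_carrier[simp]: "g \<in> carrier G \<Longrightarrow> \<rho> g \<in> carrier_mat n n"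
  using irr unfolding irreducible_rep_def representation_def by auto

lemma rho_vec[simp]: "g \<in> carrier G \<Longrightarrow> v \<in> carrier_vec n \<Longrightarrow> \<rho> g *\<^sub>v v \<in> carrier_vec n"
  using rho_carrier mult_mat_vec_carrier by blast

lemma rho_mult: "g \<in> carrier G \<Longrightarrow> h \<in> carrier G \<Longrightarrow> \<rho> (g \<otimes> h) = \<rho> g * \<rho> h"
  using irr unfolding irreducible_rep_def representation_def by auto

lemma rho_one[simp]: "\<rho> \<one> = 1\<^sub>m n"
  using irr unfolding irreducible_rep_def representation_def by auto

lemma npos: "n > 0"
  using irr unfolding irreducible_rep_def by auto

lemma invariant:
  assumes "vec_subspace n W" "\<And>g w. g \<in> carrier G \<Longrightarrow> w \<in> W \<Longrightarrow> \<rho> g *\<^sub>v w \<in> W"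
  shows "W = {0\<^sub>v n} \<or> W = carrier_vec n"
  using irr assms unfolding irreducible_rep_def by blast

lemma rho_inv1: "g \<in> carrier G \<Longrightarrow> \<rho> (inv g) * \<rho> g = 1\<^sub>m n"
  by (metis inv_closed l_inv rho_mult rho_one)

lemma rho_inv2: "g \<in> carrier G \<Longrightarrow> \<rho> g * \<rho> (inv g) = 1\<^sub>m n"
  by (metis inv_closed r_inv rho_mult rho_one)

lemma chi_one: "\<chi> \<one> = of_nat n"
  using chi[of \<one>] by (simp add: trace_one)

lemma schur:
  assumes T: "T \<in> carrier_mat n n" and comm: "\<And>g. g \<in> carrier G \<Longrightarrow> T * \<rho> g = \<rho> g * T"
  shows "\<exists>c. T = c \<cdot>\<^sub>m 1\<^sub>m n"
proof -
  from spectrum_non_empty[OF T npos] obtain c where "eigenvalue T c"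
    unfolding spectrum_def by auto
  then obtain v where v: "v \<in> carrier_vec n" "v \<noteq> 0\<^sub>v n" "T *\<^sub>v v = c \<cdot>\<^sub>v v"
    unfolding eigenvalue_def eigenvector_def using T by auto
  define W where "W = {w \<in> carrier_vec n. T *\<^sub>v w = c \<cdot>\<^sub>v w}"
  have sub: "vec_subspace n W"
    unfolding vec_subspace_def W_def
  proof (intro conjI ballI allI)
    show "0\<^sub>v n \<in> {w \<in> carrier_vec n. T *\<^sub>v w = c \<cdot>\<^sub>v w}"
      using T by (simp add: mat_vec_zero smult_zero_vec')
    fix x y assume x: "x \<in> {w \<in> carrier_vec n. T *\<^sub>v w = c \<cdot>\<^sub>v w}"
    {
      assume y: "y \<in> {w \<in> carrier_vec n. T *\<^sub>v w = c \<cdot>\<^sub>v w}"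
      show "x + y \<in> {w \<in> carrier_vec n. T *\<^sub>v w = c \<cdot>\<^sub>v w}"
        using x y T by (auto simp: mult_add_distrib_mat_vec smult_add_distrib_vec)
    }
    fix k
    show "k \<cdot>\<^sub>v x \<in> {w \<in> carrier_vec n. T *\<^sub>v w = c \<cdot>\<^sub>v w}"
      using x T by (auto simp: mult_mat_vec smult_smult_assoc mult.commute)
  qed auto
  have inv: "\<rho> g *\<^sub>v w \<in> W" if g: "g \<in> carrier G" and w: "w \<in> W" for g w
  proof -
    have wc: "w \<in> carrier_vec n" "T *\<^sub>v w = c \<cdot>\<^sub>v w" using w unfolding W_def by auto
    have "T *\<^sub>v (\<rho> g *\<^sub>v w) = (T * \<rho> g) *\<^sub>v w"
      by (rule assoc_mult_mat_vec[of _ n n, symmetric]) (use T g wc in auto)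
    also have "\<dots> = (\<rho> g * T) *\<^sub>v w" using comm g by simp
    also have "\<dots> = \<rho> g *\<^sub>v (T *\<^sub>v w)"
      by (rule assoc_mult_mat_vec[of _ n n]) (use T g wc in auto)
    also have "\<dots> = \<rho> g *\<^sub>v (c \<cdot>\<^sub>v w)" using wc by simp
    also have "\<dots> = c \<cdot>\<^sub>v (\<rho> g *\<^sub>v w)" by (rule mult_mat_vec[of _ n n]) (use g wc in auto)
    finally show ?thesis unfolding W_def using g wc by auto
  qed
  have "v \<in> W" using v unfolding W_def by auto
  then have "W = carrier_vec n" using invariant[OF sub inv] v by auto
  then have "T = c \<cdot>\<^sub>m 1\<^sub>m n" using T by (intro mat_eq_by_vec) (auto simp: W_def)
  then show ?thesis by blast
qed

lemma center_scalar:
  assumes "z \<in> grp_center G" shows "\<exists>c. \<rho> z = c \<cdot>\<^sub>m 1\<^sub>m n"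
proof -
  have z: "z \<in> carrier G" "\<And>g. g \<in> carrier G \<Longrightarrow> z \<otimes> g = g \<otimes> z"
    using assms unfolding grp_center_def by auto
  show ?thesis by (rule schur) (use z in \<open>auto simp: rho_mult[symmetric]\<close>)
qed

lemma center_ker:
  assumes "z \<in> grp_center G" "\<chi> z = \<chi> \<one>" shows "\<rho> z = 1\<^sub>m n"
proof -
  obtain c where c: "\<rho> z = c \<cdot>\<^sub>m 1\<^sub>m n" using center_scalar[OF assms(1)] by blast
  have "z \<in> carrier G" using assms unfolding grp_center_def by auto
  then have "c * of_nat n = of_nat n" using assms(2) chi c chi_one by (simp add: trace_smult_one)
  then have "c = 1" using npos by simp
  then show ?thesis using c by simp
qed

end

definition Emat :: "nat \<Rightarrow> nat \<Rightarrow> nat \<Rightarrow> complex mat" where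
  "Emat n k i = mat n n (\<lambda>(a,b). if a = k \<and> b = i then 1 else 0)"

lemma sq_mult_carrier[simp]:
  "A \<in> carrier_mat n n \<Longrightarrow> B \<in> carrier_mat n n \<Longrightarrow> A * B \<in> carrier_mat n n"
  by (rule mult_carrier_mat)

lemma assoc4:
  assumes "A \<in> carrier_mat n n" "B \<in> carrier_mat n n" "C \<in> carrier_mat n n" "D \<in> carrier_mat n n"
  shows "A * B * C * D = A * (B * C * D)"
proof -
  have "A * B * C * D = A * (B * C) * D" using assms by (simp add: assoc_mult_mat[of A n n B n C n])
  also have "\<dots> = A * (B * C * D)" using assms by (intro assoc_mult_mat[of _ n n _ n _ n]) auto
  finally show ?thesis .
qed

lemma Emat_carrier[simp]: "Emat n k i \<in> carrier_mat n n"
  unfolding Emat_def by simp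

lemma Emat_left:
  assumes S: "S \<in> carrier_mat n n" and "k < n" "i < n" "a < n" "b < n"
  shows "(S * Emat n k i) $$ (a,b) = (if b = i then S $$ (a,k) else 0)"
proof -
  have "(S * Emat n k i) $$ (a,b) = (\<Sum>l<n. S $$ (a,l) * Emat n k i $$ (l,b))"
    using assms by (intro mult_entry) auto
  also have "\<dots> = (\<Sum>l<n. if l = k then (if b = i then S $$ (a,l) else 0) else 0)"
    using assms by (intro sum.cong) (auto simp: Emat_def)
  also have "\<dots> = (if b = i then S $$ (a,k) else 0)"
    using assms by (subst sum.delta) auto
  finally show ?thesis .
qed

lemma Emat_entry:
  assumes S: "S \<in> carrier_mat n n" and R: "R \<in> carrier_mat n n" and ki: "k < n" "i < n"
  shows "(S * Emat n k i * R) $$ (k,i) = S $$ (k,k) * R $$ (i,i)"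
proof -
  have "(S * Emat n k i * R) $$ (k,i) = (\<Sum>b<n. (S * Emat n k i) $$ (k,b) * R $$ (b,i))"
    using assms by (intro mult_entry) auto
  also have "\<dots> = (\<Sum>b<n. if b = i then S $$ (k,k) * R $$ (b,i) else 0)"
    using assms by (intro sum.cong) (auto simp: Emat_left)
  also have "\<dots> = S $$ (k,k) * R $$ (i,i)"
    using assms by (subst sum.delta) auto
  finally show ?thesis .
qed

lemma Emat_trace: "k < n \<Longrightarrow> i < n \<Longrightarrow> mat_trace (Emat n k i) = (if k = i then 1 else 0)"
  unfolding mat_trace_def Emat_def by (auto simp: sum.delta)

context irrep
begin

definition Tav :: "('a \<Rightarrow> complex mat) \<Rightarrow> complex mat \<Rightarrow> complex mat" where
  "Tav \<sigma> X = msum n (\<lambda>h. \<sigma> h * X * \<rho> (inv h)) (carrier G)"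

lemma Tav_carrier[simp]: "Tav \<sigma> X \<in> carrier_mat n n"
  unfolding Tav_def by simp

lemma bij_left_mult: "g \<in> carrier G \<Longrightarrow> bij_betw (\<lambda>k. g \<otimes> k) (carrier G) (carrier G)"
  unfolding bij_betw_def
proof (intro conjI)
  assume g: "g \<in> carrier G"
  show "inj_on ((\<otimes>) g) (carrier G)" using g by (intro inj_onI) auto
  show "(\<otimes>) g ` carrier G = carrier G"
  proof
    show "(\<otimes>) g ` carrier G \<subseteq> carrier G" using g by auto
    show "carrier G \<subseteq> (\<otimes>) g ` carrier G"
    proof
      fix h assume h: "h \<in> carrier G"
      have "h = g \<otimes> (inv g \<otimes> h)" using g h by (simp add: m_assoc[symmetric])
      then show "h \<in> (\<otimes>) g ` carrier G" using g h by blast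
    qed
  qed
qed

lemma intertw:
  assumes \<sigma>c: "\<And>g. g \<in> carrier G \<Longrightarrow> \<sigma> g \<in> carrier_mat n n"
    and \<sigma>m: "\<And>g h. g \<in> carrier G \<Longrightarrow> h \<in> carrier G \<Longrightarrow> \<sigma> (g \<otimes> h) = \<sigma> g * \<sigma> h"
    and X: "X \<in> carrier_mat n n" and g: "g \<in> carrier G"
  shows "Tav \<sigma> X * \<rho> g = \<sigma> g * Tav \<sigma> X"
proof -
  have "Tav \<sigma> X * \<rho> g = msum n (\<lambda>h. \<sigma> h * X * \<rho> (inv h) * \<rho> g) (carrier G)"
    unfolding Tav_def using \<sigma>c X g by (intro msum_mult_right) auto
  also have "\<dots> = msum n (\<lambda>h. \<sigma> h * X * \<rho> (inv h \<otimes> g)) (carrier G)"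
  proof (rule msum_cong)
    fix h assume h: "h \<in> carrier G"
    have "\<sigma> h * X * \<rho> (inv h) * \<rho> g = \<sigma> h * X * (\<rho> (inv h) * \<rho> g)"
      using \<sigma>c[OF h] X g h by (intro assoc_mult_mat[of _ n n _ n _ n]) auto
    then show "\<sigma> h * X * \<rho> (inv h) * \<rho> g = \<sigma> h * X * \<rho> (inv h \<otimes> g)"
      using g h by (simp add: rho_mult)
  qed
  also have "\<dots> = msum n (\<lambda>k. \<sigma> (g \<otimes> k) * X * \<rho> (inv (g \<otimes> k) \<otimes> g)) (carrier G)"
    by (rule msum_reindex[OF bij_left_mult[OF g]])
  also have "\<dots> = msum n (\<lambda>k. \<sigma> g * (\<sigma> k * X * \<rho> (inv k))) (carrier G)"
  proof (rule msum_cong)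
    fix k assume k: "k \<in> carrier G"
    have "inv (g \<otimes> k) \<otimes> g = inv k" using g k
      by (simp add: inv_mult_group m_assoc)
    then have "\<sigma> (g \<otimes> k) * X * \<rho> (inv (g \<otimes> k) \<otimes> g) = \<sigma> g * \<sigma> k * X * \<rho> (inv k)"
      using g k by (simp add: \<sigma>m)
    also have "\<dots> = \<sigma> g * (\<sigma> k * X * \<rho> (inv k))"
      by (rule assoc4) (use g k \<sigma>c X in auto)
    finally show "\<sigma> (g \<otimes> k) * X * \<rho> (inv (g \<otimes> k) \<otimes> g) = \<sigma> g * (\<sigma> k * X * \<rho> (inv k))" .
  qed
  also have "\<dots> = \<sigma> g * Tav \<sigma> X"
    unfolding Tav_def using \<sigma>c X g by (intro msum_mult_left[symmetric]) auto
  finally show ?thesis .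
qed

lemma Tav_double_sum:
  assumes \<sigma>c: "\<And>g. g \<in> carrier G \<Longrightarrow> \<sigma> g \<in> carrier_mat n n"
  shows "(\<Sum>k<n. \<Sum>i<n. Tav \<sigma> (Emat n k i) $$ (k,i))
       = (\<Sum>h\<in>carrier G. mat_trace (\<sigma> h) * mat_trace (\<rho> (inv h)))"
proof -
  have step: "Tav \<sigma> (Emat n k i) $$ (k,i) = (\<Sum>h\<in>carrier G. \<sigma> h $$ (k,k) * \<rho> (inv h) $$ (i,i))"
    if ki: "k < n" "i < n" for k i
    unfolding Tav_def msum_index[OF ki]
  proof (rule sum.cong[OF refl])
    fix h assume h: "h \<in> carrier G"
    show "(\<sigma> h * Emat n k i * \<rho> (inv h)) $$ (k, i) = \<sigma> h $$ (k, k) * \<rho> (inv h) $$ (i, i)"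
      by (rule Emat_entry[OF \<sigma>c[OF h] rho_carrier[OF inv_closed[OF h]] ki])
  qed
  have "(\<Sum>k<n. \<Sum>i<n. Tav \<sigma> (Emat n k i) $$ (k,i))
      = (\<Sum>k<n. \<Sum>i<n. \<Sum>h\<in>carrier G. \<sigma> h $$ (k,k) * \<rho> (inv h) $$ (i,i))"
    by (intro sum.cong refl) (simp add: step)
  also have "\<dots> = (\<Sum>k<n. \<Sum>h\<in>carrier G. \<Sum>i<n. \<sigma> h $$ (k,k) * \<rho> (inv h) $$ (i,i))"
    by (intro sum.cong refl) (rule sum.swap)
  also have "\<dots> = (\<Sum>h\<in>carrier G. \<Sum>k<n. \<Sum>i<n. \<sigma> h $$ (k,k) * \<rho> (inv h) $$ (i,i))"
    by (rule sum.swap)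
  also have "\<dots> = (\<Sum>h\<in>carrier G. (\<Sum>k<n. \<sigma> h $$ (k,k)) * (\<Sum>i<n. \<rho> (inv h) $$ (i,i)))"
    by (simp only: sum_product)
  also have "\<dots> = (\<Sum>h\<in>carrier G. mat_trace (\<sigma> h) * mat_trace (\<rho> (inv h)))"
  proof (rule sum.cong[OF refl])
    fix h assume h: "h \<in> carrier G"
    have "dim_row (\<sigma> h) = n" "dim_row (\<rho> (inv h)) = n" using \<sigma>c[OF h] rho_carrier[OF inv_closed[OF h]] by auto
    then show "(\<Sum>k<n. \<sigma> h $$ (k,k)) * (\<Sum>i<n. \<rho> (inv h) $$ (i,i)) = mat_trace (\<sigma> h) * mat_trace (\<rho> (inv h))"
      unfolding mat_trace_def by simp
  qed
  finally show ?thesis .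
qed

lemma chi_sum: "(\<Sum>h\<in>carrier G. \<chi> h * \<chi> (inv h)) = of_nat (card (carrier G))"
proof -
  have ent: "Tav \<rho> (Emat n k i) $$ (k,i) = (if k = i then of_nat (card (carrier G)) / of_nat n else 0)"
    if ki: "k < n" "i < n" for k i
  proof -
    have comm: "Tav \<rho> (Emat n k i) * \<rho> g = \<rho> g * Tav \<rho> (Emat n k i)" if "g \<in> carrier G" for g
      by (rule intertw[OF rho_carrier rho_mult Emat_carrier that])
    obtain c where c: "Tav \<rho> (Emat n k i) = c \<cdot>\<^sub>m 1\<^sub>m n"
      using schur[OF Tav_carrier comm] by blast
    have "mat_trace (Tav \<rho> (Emat n k i)) = (\<Sum>h\<in>carrier G. mat_trace (\<rho> h * Emat n k i * \<rho> (inv h)))"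
      unfolding Tav_def by (rule trace_msum) auto
    also have "\<dots> = (\<Sum>h\<in>carrier G. mat_trace (Emat n k i))"
    proof (rule sum.cong[OF refl])
      fix h assume h: "h \<in> carrier G"
      have "mat_trace (\<rho> h * Emat n k i * \<rho> (inv h)) = mat_trace (\<rho> (inv h) * (\<rho> h * Emat n k i))"
        using h by (intro trace_comm[of "\<rho> h * Emat n k i" n "\<rho> (inv h)"]) auto
      also have "\<rho> (inv h) * (\<rho> h * Emat n k i) = (\<rho> (inv h) * \<rho> h) * Emat n k i"
        using h by (intro assoc_mult_mat[symmetric, of _ n n _ n _ n]) auto
      also have "\<dots> = Emat n k i" using h by (simp add: rho_inv1 left_mult_one_mat[OF Emat_carrier])
      finally show "mat_trace (\<rho> h * Emat n k i * \<rho> (inv h)) = mat_trace (Emat n k i)" .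
    qed
    also have "\<dots> = of_nat (card (carrier G)) * (if k = i then 1 else 0)"
      using ki by (simp add: Emat_trace)
    finally have tr: "c * of_nat n = of_nat (card (carrier G)) * (if k = i then 1 else 0)"
      using c by (simp add: trace_smult_one)
    have e: "Tav \<rho> (Emat n k i) $$ (k,i) = (if k = i then c else 0)"
      using c ki by simp
    show ?thesis
    proof (cases "k = i")
      case True
      then have "c = of_nat (card (carrier G)) / of_nat n" using tr npos by (simp add: field_simps)
      then show ?thesis using e True by simp
    next
      case False
      then show ?thesis using e by simp
    qed
  qed
  have "(\<Sum>k<n. \<Sum>i<n. Tav \<rho> (Emat n k i) $$ (k,i)) = (\<Sum>k<n. of_nat (card (carrier G)) / of_nat n)"
  proof (rule sum.cong[OF refl])
    fix k assume k: "k \<in> {..<n}"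
    have "(\<Sum>i<n. Tav \<rho> (Emat n k i) $$ (k,i)) = (\<Sum>i<n. if k = i then of_nat (card (carrier G)) / of_nat n else 0)"
      by (rule sum.cong[OF refl]) (use k ent in auto)
    also have "\<dots> = of_nat (card (carrier G)) / of_nat n" using k by (simp add: sum.delta)
    finally show "(\<Sum>i<n. Tav \<rho> (Emat n k i) $$ (k,i)) = of_nat (card (carrier G)) / of_nat n" .
  qed
  also have "\<dots> = of_nat (card (carrier G))" using npos by simp
  finally have s1: "(\<Sum>k<n. \<Sum>i<n. Tav \<rho> (Emat n k i) $$ (k,i)) = of_nat (card (carrier G))" .
  have "(\<Sum>h\<in>carrier G. \<chi> h * \<chi> (inv h)) = (\<Sum>h\<in>carrier G. mat_trace (\<rho> h) * mat_trace (\<rho> (inv h)))"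
    by (rule sum.cong[OF refl]) (simp add: chi)
  also have "\<dots> = (\<Sum>k<n. \<Sum>i<n. Tav \<rho> (Emat n k i) $$ (k,i))"
    by (rule Tav_double_sum[OF rho_carrier, symmetric])
  finally show ?thesis using s1 by simp
qed

lemma intertwiner_exists:
  assumes \<alpha>: "\<alpha> \<in> hom G G" and stab: "\<And>g. g \<in> carrier G \<Longrightarrow> \<chi> (\<alpha> g) = \<chi> g"
  shows "\<exists>M \<in> carrier_mat n n. det M \<noteq> 0 \<and> (\<forall>g \<in> carrier G. M * \<rho> g = \<rho> (\<alpha> g) * M)"
proof -
  define \<sigma> where "\<sigma> = (\<lambda>g. \<rho> (\<alpha> g))"
  have \<alpha>c: "\<And>g. g \<in> carrier G \<Longrightarrow> \<alpha> g \<in> carrier G" using \<alpha> unfolding hom_def by auto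
  have \<alpha>m: "\<And>g h. g \<in> carrier G \<Longrightarrow> h \<in> carrier G \<Longrightarrow> \<alpha> (g \<otimes> h) = \<alpha> g \<otimes> \<alpha> h"
    using \<alpha> unfolding hom_def by auto
  have \<sigma>c: "\<And>g. g \<in> carrier G \<Longrightarrow> \<sigma> g \<in> carrier_mat n n" using \<alpha>c by (simp add: \<sigma>_def)
  have \<sigma>m: "\<And>g h. g \<in> carrier G \<Longrightarrow> h \<in> carrier G \<Longrightarrow> \<sigma> (g \<otimes> h) = \<sigma> g * \<sigma> h"
    using \<alpha>c \<alpha>m by (simp add: \<sigma>_def rho_mult)
  have "(\<Sum>k<n. \<Sum>i<n. Tav \<sigma> (Emat n k i) $$ (k,i))
     = (\<Sum>h\<in>carrier G. mat_trace (\<sigma> h) * mat_trace (\<rho> (inv h)))"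
    by (rule Tav_double_sum[OF \<sigma>c])
  also have "\<dots> = (\<Sum>h\<in>carrier G. \<chi> h * \<chi> (inv h))"
    using \<alpha>c stab by (intro sum.cong refl) (simp add: \<sigma>_def chi[symmetric])
  also have "\<dots> \<noteq> 0" using chi_sum fin by (auto simp: card_gt_0_iff)
  finally have ne: "(\<Sum>k<n. \<Sum>i<n. Tav \<sigma> (Emat n k i) $$ (k,i)) \<noteq> 0" .
  have "\<exists>k<n. \<exists>i<n. Tav \<sigma> (Emat n k i) $$ (k,i) \<noteq> 0"
  proof (rule ccontr)
    assume "\<not> ?thesis"
    then have "(\<Sum>k<n. \<Sum>i<n. Tav \<sigma> (Emat n k i) $$ (k,i)) = 0" by simp
    then show False using ne by simp
  qed
  then obtain k i where ki: "k < n" "i < n" and nz: "Tav \<sigma> (Emat n k i) $$ (k,i) \<noteq> 0"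
    by blast
  define M where "M = Tav \<sigma> (Emat n k i)"
  have Mc: "M \<in> carrier_mat n n" unfolding M_def Tav_def by simp
  have Mi: "M * \<rho> g = \<rho> (\<alpha> g) * M" if "g \<in> carrier G" for g
  proof -
    have "Tav \<sigma> (Emat n k i) * \<rho> g = \<sigma> g * Tav \<sigma> (Emat n k i)"
      by (rule intertw[OF \<sigma>c \<sigma>m Emat_carrier that])
    then show ?thesis by (simp only: M_def \<sigma>_def)
  qed
  define K where "K = {v \<in> carrier_vec n. M *\<^sub>v v = 0\<^sub>v n}"
  have sub: "vec_subspace n K"
    unfolding vec_subspace_def K_def
  proof (intro conjI ballI allI)
    show "0\<^sub>v n \<in> {v \<in> carrier_vec n. M *\<^sub>v v = 0\<^sub>v n}" using Mc by (simp add: mat_vec_zero)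
    fix x y assume x: "x \<in> {v \<in> carrier_vec n. M *\<^sub>v v = 0\<^sub>v n}"
    {
      assume y: "y \<in> {v \<in> carrier_vec n. M *\<^sub>v v = 0\<^sub>v n}"
      show "x + y \<in> {v \<in> carrier_vec n. M *\<^sub>v v = 0\<^sub>v n}"
        using x y Mc by (auto simp: mult_add_distrib_mat_vec)
    }
    fix c
    show "c \<cdot>\<^sub>v x \<in> {v \<in> carrier_vec n. M *\<^sub>v v = 0\<^sub>v n}"
      using x Mc by (auto simp: mult_mat_vec smult_zero_vec')
  qed auto
  have inv: "\<rho> g *\<^sub>v w \<in> K" if g: "g \<in> carrier G" and w: "w \<in> K" for g w
  proof -
    have wc: "w \<in> carrier_vec n" "M *\<^sub>v w = 0\<^sub>v n" using w unfolding K_def by auto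
    have "M *\<^sub>v (\<rho> g *\<^sub>v w) = (M * \<rho> g) *\<^sub>v w"
      by (rule assoc_mult_mat_vec[of _ n n, symmetric]) (use Mc g wc in auto)
    also have "\<dots> = (\<rho> (\<alpha> g) * M) *\<^sub>v w" using Mi g by simp
    also have "\<dots> = \<rho> (\<alpha> g) *\<^sub>v (M *\<^sub>v w)"
      by (rule assoc_mult_mat_vec[of _ n n]) (use Mc g wc \<alpha>c in auto)
    also have "\<dots> = 0\<^sub>v n" using wc \<alpha>c g by (simp add: mat_vec_zero)
    finally show ?thesis unfolding K_def using g wc by auto
  qed
  have "K \<noteq> carrier_vec n"
  proof
    assume "K = carrier_vec n"
    then have "M = 0 \<cdot>\<^sub>m 1\<^sub>m n" using Mc by (intro mat_zero_by_vec) (auto simp: K_def)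
    then show False using nz ki unfolding M_def by simp
  qed
  then have K0: "K = {0\<^sub>v n}" using invariant[OF sub inv] by auto
  have "det M \<noteq> 0"
  proof
    assume "det M = 0"
    then obtain v where "v \<in> carrier_vec n" "v \<noteq> 0\<^sub>v n" "M *\<^sub>v v = 0\<^sub>v n"
      using det_0_iff_vec_prod_zero[OF Mc] by auto
    then show False using K0 unfolding K_def by auto
  qed
  then show ?thesis using Mc Mi by blast
qed

end

lemma complex_nth_root: "0 < n \<Longrightarrow> \<exists>c::complex. c ^ n = w"
proof -
  assume n: "0 < n"
  define c where "c = rcis (root n (cmod w)) (Arg w / real n)"
  have "c ^ n = rcis (root n (cmod w) ^ n) (real n * (Arg w / real n))"
    unfolding c_def by (rule DeMoivre2)
  also have "\<dots> = rcis (cmod w) (Arg w)" using n by simp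
  also have "\<dots> = w" by (rule rcis_cmod_Arg)
  finally show ?thesis by blast
qed

context irrep
begin

abbreviation "H \<equiv> aut_stab G \<chi>"

definition inn :: "'a \<Rightarrow> 'a \<Rightarrow> 'a" where
  "inn g = (\<lambda>x \<in> carrier G. g \<otimes> x \<otimes> inv g)"

lemma H_carrier: "carrier H = {\<alpha> \<in> auto G. \<forall>g \<in> carrier G. \<chi> (\<alpha> g) = \<chi> g}"
  unfolding aut_stab_def by simp

lemma H_mult_eq: "monoid.mult H = monoid.mult (AutoGroup G)"
  unfolding aut_stab_def by simp

lemma H_one_eq: "monoid.one H = (\<lambda>x \<in> carrier G. x)"
  unfolding aut_stab_def AutoGroup_def BijGroup_def by simp

lemma auto_Bij: "\<alpha> \<in> auto G \<Longrightarrow> \<alpha> \<in> Bij (carrier G)"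
  unfolding auto_def by auto

lemma Auto_mult_apply:
  assumes "\<alpha> \<in> auto G" "\<beta> \<in> auto G" "g \<in> carrier G"
  shows "(\<alpha> \<otimes>\<^bsub>AutoGroup G\<^esub> \<beta>) g = \<alpha> (\<beta> g)"
  using assms auto_Bij[OF assms(1)] auto_Bij[OF assms(2)]
  unfolding AutoGroup_def BijGroup_def by (simp add: compose_def)

lemma H_elem:
  assumes "\<alpha> \<in> carrier H"
  shows "\<alpha> \<in> auto G" "\<alpha> \<in> hom G G" "\<And>g. g \<in> carrier G \<Longrightarrow> \<alpha> g \<in> carrier G"
    "\<And>g h. g \<in> carrier G \<Longrightarrow> h \<in> carrier G \<Longrightarrow> \<alpha> (g \<otimes> h) = \<alpha> g \<otimes> \<alpha> h"
    "\<alpha> \<in> extensional (carrier G)" "\<And>g. g \<in> carrier G \<Longrightarrow> \<chi> (\<alpha> g) = \<chi> g"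
proof -
  show a: "\<alpha> \<in> auto G" using assms unfolding H_carrier by blast
  show h: "\<alpha> \<in> hom G G" using a unfolding auto_def by blast
  show "\<And>g. g \<in> carrier G \<Longrightarrow> \<alpha> g \<in> carrier G" using h unfolding hom_def by blast
  show "\<And>g h. g \<in> carrier G \<Longrightarrow> h \<in> carrier G \<Longrightarrow> \<alpha> (g \<otimes> h) = \<alpha> g \<otimes> \<alpha> h"
    using h unfolding hom_def by blast
  show "\<alpha> \<in> extensional (carrier G)" using a unfolding auto_def Bij_def by blast
  show "\<And>g. g \<in> carrier G \<Longrightarrow> \<chi> (\<alpha> g) = \<chi> g" using assms unfolding H_carrier by blast
qed

lemma H_mult_apply:
  assumes "\<alpha> \<in> carrier H" "\<beta> \<in> carrier H" "g \<in> carrier G"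
  shows "(\<alpha> \<otimes>\<^bsub>H\<^esub> \<beta>) g = \<alpha> (\<beta> g)"
  unfolding H_mult_eq using Auto_mult_apply H_elem(1) assms by blast

lemma H_eqI:
  assumes "\<alpha> \<in> carrier H" "\<beta> \<in> carrier H" "\<And>g. g \<in> carrier G \<Longrightarrow> \<alpha> g = \<beta> g"
  shows "\<alpha> = \<beta>"
  using H_elem(5)[OF assms(1)] H_elem(5)[OF assms(2)] assms(3) by (rule extensionalityI)

lemma AG_carrier: "carrier (AutoGroup G) = auto G"
  unfolding AutoGroup_def by simp

lemma AG_one: "\<one>\<^bsub>AutoGroup G\<^esub> = (\<lambda>x\<in>carrier G. x)"
  unfolding AutoGroup_def BijGroup_def by simp

lemma subgroup_H: "subgroup (carrier H) (AutoGroup G)"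
proof -
  interpret AG: group "AutoGroup G" by (rule AutoGroup)
  show ?thesis
  proof (rule AG.subgroupI)
    show "carrier H \<subseteq> carrier (AutoGroup G)" unfolding H_carrier AG_carrier by blast
    have "(\<lambda>x \<in> carrier G. x) \<in> carrier H" unfolding H_carrier using id_in_auto by simp
    then show "carrier H \<noteq> {}" by blast
  next
    fix \<alpha> assume a: "\<alpha> \<in> carrier H"
    have a0: "\<alpha> \<in> auto G" by (rule H_elem(1)[OF a])
    have a1: "\<alpha> \<in> carrier (AutoGroup G)" using a0 unfolding AG_carrier .
    have ia: "inv\<^bsub>AutoGroup G\<^esub> \<alpha> \<in> auto G" using AG.inv_closed[OF a1] unfolding AG_carrier .
    have r: "\<alpha> \<otimes>\<^bsub>AutoGroup G\<^esub> inv\<^bsub>AutoGroup G\<^esub> \<alpha> = \<one>\<^bsub>AutoGroup G\<^esub>" using AG.r_inv[OF a1] .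
    have app: "\<alpha> ((inv\<^bsub>AutoGroup G\<^esub> \<alpha>) g) = g" if g: "g \<in> carrier G" for g
    proof -
      have "(\<alpha> \<otimes>\<^bsub>AutoGroup G\<^esub> inv\<^bsub>AutoGroup G\<^esub> \<alpha>) g = g" unfolding r AG_one using g by simp
      then show ?thesis unfolding Auto_mult_apply[OF a0 ia g] .
    qed
    have cl: "(inv\<^bsub>AutoGroup G\<^esub> \<alpha>) g \<in> carrier G" if "g \<in> carrier G" for g
      using ia that unfolding auto_def hom_def by blast
    have "\<chi> ((inv\<^bsub>AutoGroup G\<^esub> \<alpha>) g) = \<chi> g" if g: "g \<in> carrier G" for g
      using H_elem(6)[OF a cl[OF g]] app[OF g] by simp
    then show "inv\<^bsub>AutoGroup G\<^esub> \<alpha> \<in> carrier H"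
      unfolding H_carrier using ia by blast
  next
    fix \<alpha> \<beta> assume a: "\<alpha> \<in> carrier H" and b: "\<beta> \<in> carrier H"
    have a0: "\<alpha> \<in> auto G" by (rule H_elem(1)[OF a])
    have b0: "\<beta> \<in> auto G" by (rule H_elem(1)[OF b])
    have ab: "\<alpha> \<otimes>\<^bsub>AutoGroup G\<^esub> \<beta> \<in> auto G"
      using AG.m_closed[of \<alpha> \<beta>] a0 b0 unfolding AG_carrier by blast
    have "\<chi> ((\<alpha> \<otimes>\<^bsub>AutoGroup G\<^esub> \<beta>) g) = \<chi> g" if g: "g \<in> carrier G" for g
    proof -
      have "(\<alpha> \<otimes>\<^bsub>AutoGroup G\<^esub> \<beta>) g = \<alpha> (\<beta> g)" by (rule Auto_mult_apply[OF a0 b0 g])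
      also have "\<chi> (\<alpha> (\<beta> g)) = \<chi> (\<beta> g)" by (rule H_elem(6)[OF a H_elem(3)[OF b g]])
      also have "\<dots> = \<chi> g" by (rule H_elem(6)[OF b g])
      finally show ?thesis .
    qed
    then show "\<alpha> \<otimes>\<^bsub>AutoGroup G\<^esub> \<beta> \<in> carrier H"
      unfolding H_carrier using ab by blast
  qed
qed

lemma H_group: "group H"
proof -
  interpret AG: group "AutoGroup G" by (rule AutoGroup)
  have "group ((AutoGroup G)\<lparr>carrier := carrier H\<rparr>)"
    by (rule subgroup.subgroup_is_group[OF subgroup_H AG.is_group])
  moreover have "(AutoGroup G)\<lparr>carrier := carrier H\<rparr> = H"
    unfolding aut_stab_def by simp
  ultimately show ?thesis by simp
qed

lemma H_one_apply: "g \<in> carrier G \<Longrightarrow> \<one>\<^bsub>H\<^esub> g = g"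
  by (simp add: H_one_eq)

lemma H_inv_apply:
  assumes a: "\<alpha> \<in> carrier H" and g: "g \<in> carrier G"
  shows "\<alpha> ((inv\<^bsub>H\<^esub> \<alpha>) g) = g" "(inv\<^bsub>H\<^esub> \<alpha>) (\<alpha> g) = g"
proof -
  interpret Hg: group H by (rule H_group)
  have ia: "inv\<^bsub>H\<^esub> \<alpha> \<in> carrier H" using a by simp
  show "\<alpha> ((inv\<^bsub>H\<^esub> \<alpha>) g) = g"
    using H_mult_apply[OF a ia g] Hg.r_inv[OF a] g by (simp add: H_one_apply)
  show "(inv\<^bsub>H\<^esub> \<alpha>) (\<alpha> g) = g"
    using H_mult_apply[OF ia a g] Hg.l_inv[OF a] g by (simp add: H_one_apply)
qed

lemma finite_H: "finite (carrier H)"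
proof (rule finite_subset)
  show "carrier H \<subseteq> carrier G \<rightarrow>\<^sub>E carrier G"
  proof
    fix \<alpha> assume a: "\<alpha> \<in> carrier H"
    show "\<alpha> \<in> carrier G \<rightarrow>\<^sub>E carrier G"
    proof (rule PiE_I)
      show "\<And>x. x \<in> carrier G \<Longrightarrow> \<alpha> x \<in> carrier G" by (rule H_elem(3)[OF a])
      show "\<And>x. x \<notin> carrier G \<Longrightarrow> \<alpha> x = undefined"
        using H_elem(5)[OF a] by (rule extensional_arb)
    qed
  qed
  show "finite (carrier G \<rightarrow>\<^sub>E carrier G)" by (rule finite_PiE[OF fin fin])
qed

lemma chi_conj: "g \<in> carrier G \<Longrightarrow> x \<in> carrier G \<Longrightarrow> \<chi> (g \<otimes> x \<otimes> inv g) = \<chi> x"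
proof -
  assume g: "g \<in> carrier G" and x: "x \<in> carrier G"
  have ig: "inv g \<in> carrier G" using g by (rule inv_closed)
  have "\<chi> (g \<otimes> x \<otimes> inv g) = mat_trace (\<rho> (g \<otimes> x \<otimes> inv g))" using g x ig by (intro chi) (intro m_closed)
  also have "\<rho> (g \<otimes> x \<otimes> inv g) = \<rho> g * \<rho> x * \<rho> (inv g)"
    using g x ig by (simp only: rho_mult m_closed)
  also have "mat_trace (\<rho> g * \<rho> x * \<rho> (inv g)) = mat_trace (\<rho> (inv g) * (\<rho> g * \<rho> x))"
    by (rule trace_comm[of "\<rho> g * \<rho> x" n "\<rho> (inv g)"]) (use g x ig in simp_all)
  also have "\<rho> (inv g) * (\<rho> g * \<rho> x) = \<rho> (inv g \<otimes> (g \<otimes> x))"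
    using g x ig by (simp only: rho_mult m_closed)
  also have "inv g \<otimes> (g \<otimes> x) = x" using g x by (simp add: m_assoc[symmetric])
  finally show ?thesis using x by (simp add: chi)
qed

lemma inv_cancel_l[simp]: "g \<in> carrier G \<Longrightarrow> z \<in> carrier G \<Longrightarrow> inv g \<otimes> (g \<otimes> z) = z"
  by (simp add: m_assoc[symmetric])

lemma inv_cancel_l2[simp]: "g \<in> carrier G \<Longrightarrow> z \<in> carrier G \<Longrightarrow> g \<otimes> (inv g \<otimes> z) = z"
  by (simp add: m_assoc[symmetric])

lemma inn_apply: "x \<in> carrier G \<Longrightarrow> inn g x = g \<otimes> x \<otimes> inv g"
  unfolding inn_def by simp

lemma inn_H: assumes g: "g \<in> carrier G" shows "inn g \<in> carrier H"
proof -
  have hom: "inn g \<in> hom G G"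
    unfolding hom_def using g by (auto simp: inn_apply m_assoc)
  have inj: "inj_on (inn g) (carrier G)"
    using g by (intro inj_onI) (auto simp: inn_apply)
  have surj: "inn g ` carrier G = carrier G"
  proof
    show "inn g ` carrier G \<subseteq> carrier G" using g by (auto simp: inn_apply)
    show "carrier G \<subseteq> inn g ` carrier G"
    proof
      fix y assume y: "y \<in> carrier G"
      have "y = inn g (inv g \<otimes> y \<otimes> g)" using g y by (simp add: inn_apply m_assoc)
      then show "y \<in> inn g ` carrier G" using g y by blast
    qed
  qed
  have "inn g \<in> auto G"
    unfolding auto_def Bij_def using hom inj surj by (auto simp: bij_betw_def inn_def)
  then show ?thesis unfolding H_carrier using g by (auto simp: inn_apply chi_conj)
qed

lemma inn_mult: "g \<in> carrier G \<Longrightarrow> h \<in> carrier G \<Longrightarrow> inn g \<otimes>\<^bsub>H\<^esub> inn h = inn (g \<otimes> h)"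
proof -
  assume g: "g \<in> carrier G" and h: "h \<in> carrier G"
  interpret Hg: group H by (rule H_group)
  show ?thesis
    by (rule H_eqI) (use g h inn_H in \<open>auto simp: H_mult_apply inn_apply m_assoc inv_mult_group\<close>)
qed

lemma conj_inn:
  assumes a: "\<alpha> \<in> carrier H" and g: "g \<in> carrier G"
  shows "\<alpha> \<otimes>\<^bsub>H\<^esub> inn g \<otimes>\<^bsub>H\<^esub> inv\<^bsub>H\<^esub> \<alpha> = inn (\<alpha> g)"
proof -
  interpret Hg: group H by (rule H_group)
  interpret gh: group_hom G G \<alpha> using H_elem(2)[OF a] by unfold_locales
  have ia: "inv\<^bsub>H\<^esub> \<alpha> \<in> carrier H" using a by simp
  show ?thesis
  proof (rule H_eqI)
    show "\<alpha> \<otimes>\<^bsub>H\<^esub> inn g \<otimes>\<^bsub>H\<^esub> inv\<^bsub>H\<^esub> \<alpha> \<in> carrier H" using a g ia inn_H by simp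
    show "inn (\<alpha> g) \<in> carrier H" using inn_H H_elem(3)[OF a g] by simp
    fix y assume y: "y \<in> carrier G"
    have iy: "(inv\<^bsub>H\<^esub> \<alpha>) y \<in> carrier G" using H_elem(3)[OF ia y] .
    have "(\<alpha> \<otimes>\<^bsub>H\<^esub> inn g \<otimes>\<^bsub>H\<^esub> inv\<^bsub>H\<^esub> \<alpha>) y = \<alpha> (g \<otimes> (inv\<^bsub>H\<^esub> \<alpha>) y \<otimes> inv g)"
      using a g ia y iy inn_H[OF g] by (simp add: H_mult_apply inn_apply)
    also have "\<dots> = \<alpha> g \<otimes> y \<otimes> inv (\<alpha> g)"
      using g iy y by (simp add: H_inv_apply[OF a y])
    also have "\<dots> = inn (\<alpha> g) y" using y by (simp add: inn_apply)
    finally show "(\<alpha> \<otimes>\<^bsub>H\<^esub> inn g \<otimes>\<^bsub>H\<^esub> inv\<^bsub>H\<^esub> \<alpha>) y = inn (\<alpha> g) y" .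
  qed
qed

end

lemma one_mult_sq[simp]: "(A::complex mat) \<in> carrier_mat n n \<Longrightarrow> 1\<^sub>m n * A = A"
  by (rule left_mult_one_mat)

lemma mult_one_sq[simp]: "(A::complex mat) \<in> carrier_mat n n \<Longrightarrow> A * 1\<^sub>m n = A"
  by (rule right_mult_one_mat)

context irrep
begin

definition A0 :: "(('a \<Rightarrow> 'a) \<times> complex mat) set" where
  "A0 = {p. fst p \<in> carrier H \<and> snd p \<in> carrier_mat n n \<and>
     (\<forall>g \<in> carrier G. snd p * \<rho> g = \<rho> (fst p g) * snd p) \<and> det (snd p) ^ card (carrier G) = 1}"

definition m0 :: "(('a \<Rightarrow> 'a) \<times> complex mat) \<Rightarrow> (('a \<Rightarrow> 'a) \<times> complex mat) \<Rightarrow> (('a \<Rightarrow> 'a) \<times> complex mat)" where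
  "m0 p q = (fst p \<otimes>\<^bsub>H\<^esub> fst q, snd p * snd q)"

definition A0M :: "(('a \<Rightarrow> 'a) \<times> complex mat) monoid" where
  "A0M = \<lparr>carrier = A0, monoid.mult = m0, one = (\<one>\<^bsub>H\<^esub>, 1\<^sub>m n)\<rparr>"

lemma A0_iff: "(\<alpha>, M) \<in> A0 \<longleftrightarrow> \<alpha> \<in> carrier H \<and> M \<in> carrier_mat n n \<and>
     (\<forall>g \<in> carrier G. M * \<rho> g = \<rho> (\<alpha> g) * M) \<and> det M ^ card (carrier G) = 1"
  unfolding A0_def by simp

lemma order_pos: "0 < card (carrier G)"
  using fin one_closed by (auto simp: card_gt_0_iff)

lemma A0_det_nz: "(\<alpha>, M) \<in> A0 \<Longrightarrow> det M \<noteq> 0"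
  using order_pos unfolding A0_iff by (auto simp: zero_power)

lemma m0_pair: "m0 (\<alpha>, M) (\<beta>, L) = (\<alpha> \<otimes>\<^bsub>H\<^esub> \<beta>, M * L)"
  unfolding m0_def by simp

lemma m0_closed:
  assumes p: "(\<alpha>, M) \<in> A0" and q: "(\<beta>, L) \<in> A0"
  shows "m0 (\<alpha>, M) (\<beta>, L) \<in> A0"
proof -
  interpret Hg: group H by (rule H_group)
  have a: "\<alpha> \<in> carrier H" and M: "M \<in> carrier_mat n n" and Mi: "\<And>g. g \<in> carrier G \<Longrightarrow> M * \<rho> g = \<rho> (\<alpha> g) * M"
    and dM: "det M ^ card (carrier G) = 1" using p unfolding A0_iff by auto
  have b: "\<beta> \<in> carrier H" and L: "L \<in> carrier_mat n n" and Li: "\<And>g. g \<in> carrier G \<Longrightarrow> L * \<rho> g = \<rho> (\<beta> g) * L"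
    and dL: "det L ^ card (carrier G) = 1" using q unfolding A0_iff by auto
  have "M * L * \<rho> g = \<rho> ((\<alpha> \<otimes>\<^bsub>H\<^esub> \<beta>) g) * (M * L)" if g: "g \<in> carrier G" for g
  proof -
    have bg: "\<beta> g \<in> carrier G" using H_elem(3)[OF b g] .
    have "M * L * \<rho> g = M * (L * \<rho> g)" using M L g by (intro assoc_mult_mat[of _ n n _ n _ n]) auto
    also have "\<dots> = M * (\<rho> (\<beta> g) * L)" using Li[OF g] by simp
    also have "\<dots> = (M * \<rho> (\<beta> g)) * L" using M L bg by (intro assoc_mult_mat[symmetric, of _ n n _ n _ n]) auto
    also have "\<dots> = (\<rho> (\<alpha> (\<beta> g)) * M) * L" using Mi[OF bg] by simp
    also have "\<dots> = \<rho> (\<alpha> (\<beta> g)) * (M * L)" using M L H_elem(3)[OF a bg]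
      by (intro assoc_mult_mat[of _ n n _ n _ n]) auto
    also have "\<alpha> (\<beta> g) = (\<alpha> \<otimes>\<^bsub>H\<^esub> \<beta>) g" using H_mult_apply[OF a b g] by simp
    finally show ?thesis .
  qed
  moreover have "det (M * L) ^ card (carrier G) = 1"
    using dM dL by (simp add: det_mult[OF M L] power_mult_distrib)
  moreover have "\<alpha> \<otimes>\<^bsub>H\<^esub> \<beta> \<in> carrier H" using a b by simp
  moreover have "M * L \<in> carrier_mat n n" using M L by simp
  ultimately show ?thesis unfolding m0_pair A0_iff by blast
qed

lemma one_A0: "(\<one>\<^bsub>H\<^esub>, 1\<^sub>m n) \<in> A0"
proof -
  interpret Hg: group H by (rule H_group)
  have "1\<^sub>m n * \<rho> g = \<rho> (\<one>\<^bsub>H\<^esub> g) * 1\<^sub>m n" if g: "g \<in> carrier G" for g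
  proof -
    have "\<one>\<^bsub>H\<^esub> g = g" using H_one_apply g .
    then show ?thesis using g by simp
  qed
  then show ?thesis unfolding A0_iff
    by (intro conjI ballI) (simp_all only: Hg.one_closed one_carrier_mat det_one power_one)
qed

lemma A0_inverse:
  assumes p: "(\<alpha>, M) \<in> A0" and B: "B \<in> carrier_mat n n" "M * B = 1\<^sub>m n" "B * M = 1\<^sub>m n"
  shows "(inv\<^bsub>H\<^esub> \<alpha>, B) \<in> A0" "m0 (inv\<^bsub>H\<^esub> \<alpha>, B) (\<alpha>, M) = (\<one>\<^bsub>H\<^esub>, 1\<^sub>m n)"
    "m0 (\<alpha>, M) (inv\<^bsub>H\<^esub> \<alpha>, B) = (\<one>\<^bsub>H\<^esub>, 1\<^sub>m n)"
proof -
  interpret Hg: group H by (rule H_group)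
  have a: "\<alpha> \<in> carrier H" and M: "M \<in> carrier_mat n n" and Mi: "\<And>g. g \<in> carrier G \<Longrightarrow> M * \<rho> g = \<rho> (\<alpha> g) * M"
    and dM: "det M ^ card (carrier G) = 1" using p unfolding A0_iff by auto
  have ia: "inv\<^bsub>H\<^esub> \<alpha> \<in> carrier H" using a by simp
  have "B * \<rho> g = \<rho> ((inv\<^bsub>H\<^esub> \<alpha>) g) * B" if g: "g \<in> carrier G" for g
  proof -
    define y where "y = (inv\<^bsub>H\<^esub> \<alpha>) g"
    have y: "y \<in> carrier G" unfolding y_def using H_elem(3)[OF ia g] .
    have ay: "\<alpha> y = g" unfolding y_def using H_inv_apply(1)[OF a g] .
    have e: "M * \<rho> y = \<rho> g * M" using Mi[OF y] ay by simp
    have "\<rho> y * B = (B * M) * (\<rho> y * B)" using B y by (simp only: one_mult_sq sq_mult_carrier rho_carrier)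
    also have "\<dots> = B * (M * \<rho> y) * B"
      using B(1) M y by (simp add: assoc_mult_mat[of _ n n _ n _ n])
    also have "\<dots> = B * (\<rho> g * M) * B" using e by simp
    also have "\<dots> = B * \<rho> g * (M * B)"
      using B M g by (simp add: assoc_mult_mat[of _ n n _ n _ n])
    also have "\<dots> = B * \<rho> g" using B g by simp
    finally show ?thesis unfolding y_def by simp
  qed
  moreover have "det B ^ card (carrier G) = 1"
  proof -
    have "det B * det M = 1" using B M det_mult[OF B(1) M] by simp
    then have "(det B * det M) ^ card (carrier G) = 1" by simp
    then show ?thesis using dM by (simp add: power_mult_distrib)
  qed
  ultimately show "(inv\<^bsub>H\<^esub> \<alpha>, B) \<in> A0" unfolding A0_iff using ia B by blast
  show "m0 (inv\<^bsub>H\<^esub> \<alpha>, B) (\<alpha>, M) = (\<one>\<^bsub>H\<^esub>, 1\<^sub>m n)" using a B by (simp add: m0_pair)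
  show "m0 (\<alpha>, M) (inv\<^bsub>H\<^esub> \<alpha>, B) = (\<one>\<^bsub>H\<^esub>, 1\<^sub>m n)" using a B by (simp add: m0_pair)
qed

lemma A0M_group: "group A0M"
proof -
  interpret Hg: group H by (rule H_group)
  show ?thesis
  proof (rule groupI)
    fix x y assume "x \<in> carrier A0M" "y \<in> carrier A0M"
    then show "x \<otimes>\<^bsub>A0M\<^esub> y \<in> carrier A0M"
      unfolding A0M_def using m0_closed by (cases x, cases y) auto
  next
    show "\<one>\<^bsub>A0M\<^esub> \<in> carrier A0M" unfolding A0M_def using one_A0 by simp
  next
    fix x y z assume x: "x \<in> carrier A0M" and y: "y \<in> carrier A0M" and z: "z \<in> carrier A0M"
    obtain \<alpha> M where xe: "x = (\<alpha>, M)" by (cases x)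
    obtain \<beta> L where ye: "y = (\<beta>, L)" by (cases y)
    obtain \<gamma> R where ze: "z = (\<gamma>, R)" by (cases z)
    have "\<alpha> \<in> carrier H" "M \<in> carrier_mat n n" using x unfolding A0M_def xe by (auto simp: A0_iff)
    moreover have "\<beta> \<in> carrier H" "L \<in> carrier_mat n n" using y unfolding A0M_def ye by (auto simp: A0_iff)
    moreover have "\<gamma> \<in> carrier H" "R \<in> carrier_mat n n" using z unfolding A0M_def ze by (auto simp: A0_iff)
    ultimately show "x \<otimes>\<^bsub>A0M\<^esub> y \<otimes>\<^bsub>A0M\<^esub> z = x \<otimes>\<^bsub>A0M\<^esub> (y \<otimes>\<^bsub>A0M\<^esub> z)"
      unfolding A0M_def xe ye ze by (simp add: m0_pair Hg.m_assoc assoc_mult_mat[of _ n n _ n _ n])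
  next
    fix x assume x: "x \<in> carrier A0M"
    obtain \<alpha> M where xe: "x = (\<alpha>, M)" by (cases x)
    have "\<alpha> \<in> carrier H" "M \<in> carrier_mat n n" using x unfolding A0M_def xe by (auto simp: A0_iff)
    then show "\<one>\<^bsub>A0M\<^esub> \<otimes>\<^bsub>A0M\<^esub> x = x" unfolding A0M_def xe by (simp add: m0_pair)
  next
    fix x assume x: "x \<in> carrier A0M"
    obtain \<alpha> M where xe: "x = (\<alpha>, M)" by (cases x)
    have p: "(\<alpha>, M) \<in> A0" using x unfolding A0M_def xe by simp
    have M: "M \<in> carrier_mat n n" using p unfolding A0_iff by auto
    obtain B where B: "B \<in> carrier_mat n n" "M * B = 1\<^sub>m n" "B * M = 1\<^sub>m n"
      using det_nz_inverse[OF M A0_det_nz[OF p]] by blast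
    show "\<exists>y \<in> carrier A0M. y \<otimes>\<^bsub>A0M\<^esub> x = \<one>\<^bsub>A0M\<^esub>"
      using A0_inverse[OF p B] unfolding A0M_def xe by auto
  qed
qed

lemma A0M_inv:
  assumes p: "(\<alpha>, M) \<in> A0" and B: "B \<in> carrier_mat n n" "M * B = 1\<^sub>m n" "B * M = 1\<^sub>m n"
  shows "inv\<^bsub>A0M\<^esub> (\<alpha>, M) = (inv\<^bsub>H\<^esub> \<alpha>, B)"
proof -
  interpret A: group A0M by (rule A0M_group)
  show ?thesis
    by (rule A.inv_equality) (use A0_inverse[OF p B] p in \<open>auto simp: A0M_def\<close>)
qed

end

context irrep
begin

lemma fiber_scalar:
  assumes p0: "(\<alpha>, M0) \<in> A0" and p: "(\<alpha>, M) \<in> A0"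
  shows "\<exists>c. M = c \<cdot>\<^sub>m M0 \<and> c ^ (n * card (carrier G)) = 1"
proof -
  have M0: "M0 \<in> carrier_mat n n" and M0i: "\<And>g. g \<in> carrier G \<Longrightarrow> M0 * \<rho> g = \<rho> (\<alpha> g) * M0"
    and d0: "det M0 ^ card (carrier G) = 1" and a: "\<alpha> \<in> carrier H" using p0 unfolding A0_iff by auto
  have M: "M \<in> carrier_mat n n" and Mi: "\<And>g. g \<in> carrier G \<Longrightarrow> M * \<rho> g = \<rho> (\<alpha> g) * M"
    and d: "det M ^ card (carrier G) = 1" using p unfolding A0_iff by auto
  obtain B where B: "B \<in> carrier_mat n n" "M0 * B = 1\<^sub>m n" "B * M0 = 1\<^sub>m n"
    using det_nz_inverse[OF M0 A0_det_nz[OF p0]] by blast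
  have Bi: "B * \<rho> (\<alpha> g) = \<rho> g * B" if g: "g \<in> carrier G" for g
  proof -
    have ag: "\<alpha> g \<in> carrier G" using H_elem(3)[OF a g] .
    have "\<rho> g * B = (B * M0) * \<rho> g * B" using B g by simp
    also have "\<dots> = B * (M0 * \<rho> g) * B" using B(1) M0 g by (simp add: assoc_mult_mat[of _ n n _ n _ n])
    also have "\<dots> = B * (\<rho> (\<alpha> g) * M0) * B" using M0i[OF g] by simp
    also have "\<dots> = B * \<rho> (\<alpha> g) * (M0 * B)" using B(1) M0 ag by (simp add: assoc_mult_mat[of _ n n _ n _ n])
    also have "\<dots> = B * \<rho> (\<alpha> g)" using B ag by simp
    finally show ?thesis by simp
  qed
  define T where "T = B * M"
  have T: "T \<in> carrier_mat n n" unfolding T_def using B M by simp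
  have "T * \<rho> g = \<rho> g * T" if g: "g \<in> carrier G" for g
  proof -
    have ag: "\<alpha> g \<in> carrier G" using H_elem(3)[OF a g] .
    have "T * \<rho> g = B * (M * \<rho> g)" unfolding T_def using B M g by (simp add: assoc_mult_mat[of _ n n _ n _ n])
    also have "\<dots> = B * (\<rho> (\<alpha> g) * M)" using Mi[OF g] by simp
    also have "\<dots> = (B * \<rho> (\<alpha> g)) * M" using B M ag by (simp add: assoc_mult_mat[of _ n n _ n _ n])
    also have "\<dots> = (\<rho> g * B) * M" using Bi[OF g] by simp
    also have "\<dots> = \<rho> g * T" unfolding T_def using B M g by (simp add: assoc_mult_mat[of _ n n _ n _ n])
    finally show ?thesis .
  qed
  then obtain c where c: "T = c \<cdot>\<^sub>m 1\<^sub>m n" using schur[OF T] by blast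
  have "M = (M0 * B) * M" using B(2) M by simp
  also have "\<dots> = M0 * T" unfolding T_def using B(1) M M0 by (simp add: assoc_mult_mat[of _ n n _ n _ n])
  also have "\<dots> = c \<cdot>\<^sub>m (M0 * 1\<^sub>m n)" unfolding c by (rule mult_smult_distrib[of M0 n n "1\<^sub>m n" n]) (use M0 in auto)
  also have "\<dots> = c \<cdot>\<^sub>m M0" using M0 by simp
  finally have Me: "M = c \<cdot>\<^sub>m M0" .
  have "det M = c ^ n * det M0" unfolding Me using M0 by simp
  then have "det M ^ card (carrier G) = c ^ (n * card (carrier G)) * det M0 ^ card (carrier G)"
    by (simp add: power_mult_distrib power_mult)
  then have "c ^ (n * card (carrier G)) = 1" using d d0 by simp
  then show ?thesis using Me by blast
qed

lemma finite_A0: "finite A0"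
proof -
  define MM where "MM = (\<lambda>\<alpha>. SOME M. (\<alpha>, M) \<in> A0)"
  define R where "R = {c::complex. c ^ (n * card (carrier G)) = 1}"
  have R: "finite R" unfolding R_def
    by (rule finite_roots_unity) (use npos order_pos in simp)
  have "A0 \<subseteq> (\<Union>\<alpha> \<in> carrier H. {\<alpha>} \<times> ((\<lambda>c. c \<cdot>\<^sub>m MM \<alpha>) ` R))"
  proof
    fix p assume p: "p \<in> A0"
    obtain \<alpha> M where pe: "p = (\<alpha>, M)" by (cases p)
    have pa: "(\<alpha>, M) \<in> A0" using p pe by simp
    have a: "\<alpha> \<in> carrier H" using pa unfolding A0_iff by simp
    have "(\<alpha>, MM \<alpha>) \<in> A0" unfolding MM_def using pa by (rule someI)
    from fiber_scalar[OF this pa] obtain c where "M = c \<cdot>\<^sub>m MM \<alpha>" "c \<in> R" unfolding R_def by blast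
    then show "p \<in> (\<Union>\<alpha> \<in> carrier H. {\<alpha>} \<times> ((\<lambda>c. c \<cdot>\<^sub>m MM \<alpha>) ` R))" using a pe by blast
  qed
  moreover have "finite (\<Union>\<alpha> \<in> carrier H. {\<alpha>} \<times> ((\<lambda>c. c \<cdot>\<^sub>m MM \<alpha>) ` R))"
    using finite_H R by blast
  ultimately show ?thesis by (rule finite_subset)
qed

lemma fst_A0_surj:
  assumes a: "\<alpha> \<in> carrier H" shows "\<exists>M. (\<alpha>, M) \<in> A0"
proof -
  obtain M where M: "M \<in> carrier_mat n n" "det M \<noteq> 0" and Mi: "\<forall>g \<in> carrier G. M * \<rho> g = \<rho> (\<alpha> g) * M"
    using intertwiner_exists[OF H_elem(2)[OF a] H_elem(6)[OF a]] by blast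
  obtain c where c: "c ^ n = inverse (det M)" using complex_nth_root[OF npos] by blast
  define M' where "M' = c \<cdot>\<^sub>m M"
  have M': "M' \<in> carrier_mat n n" unfolding M'_def using M by simp
  have "det M' = 1" unfolding M'_def using M c by simp
  moreover have "M' * \<rho> g = \<rho> (\<alpha> g) * M'" if g: "g \<in> carrier G" for g
  proof -
    have ag: "\<alpha> g \<in> carrier G" using H_elem(3)[OF a g] .
    have "M' * \<rho> g = c \<cdot>\<^sub>m (M * \<rho> g)" unfolding M'_def
      by (rule mult_smult_assoc_mat[of M n n "\<rho> g" n]) (use M g in auto)
    also have "\<dots> = c \<cdot>\<^sub>m (\<rho> (\<alpha> g) * M)" using Mi g by simp
    also have "\<dots> = \<rho> (\<alpha> g) * M'" unfolding M'_def
      by (rule mult_smult_distrib[of _ n n, symmetric]) (use M ag in auto)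
    finally show ?thesis .
  qed
  ultimately have "(\<alpha>, M') \<in> A0" unfolding A0_iff using a M' by simp
  then show ?thesis by blast
qed

lemma det_rho_pow: "x \<in> carrier G \<Longrightarrow> det (\<rho> (x [^] (k::nat))) = det (\<rho> x) ^ k"
proof (induction k)
  case 0
  then show ?case by simp
next
  case (Suc k)
  have "det (\<rho> (x [^] Suc k)) = det (\<rho> (x [^] k) * \<rho> x)" using Suc.prems by (simp add: rho_mult)
  also have "\<dots> = det (\<rho> (x [^] k)) * det (\<rho> x)" using Suc.prems by (intro det_mult[of _ n]) auto
  finally show ?case using Suc by simp
qed

lemma inn_pair_A0: assumes x: "x \<in> carrier G" shows "(inn x, \<rho> x) \<in> A0"
proof -
  have "\<rho> x * \<rho> g = \<rho> (inn x g) * \<rho> x" if g: "g \<in> carrier G" for g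
  proof -
    have "\<rho> (inn x g) * \<rho> x = \<rho> (x \<otimes> g \<otimes> inv x \<otimes> x)" using x g by (simp add: inn_apply rho_mult)
    also have "x \<otimes> g \<otimes> inv x \<otimes> x = x \<otimes> g" using x g by (simp add: m_assoc)
    finally show ?thesis using x g by (simp add: rho_mult)
  qed
  moreover have "det (\<rho> x) ^ card (carrier G) = 1"
  proof -
    have "x [^] card (carrier G) = \<one>" using pow_order_eq_1[OF x] by (simp add: Coset.order_def)
    then have "det (\<rho> (x [^] card (carrier G))) = 1" by simp
    then show ?thesis using det_rho_pow[OF x] by simp
  qed
  ultimately show ?thesis unfolding A0_iff using inn_H[OF x] x by simp
qed

end

definition tmon :: "('p \<Rightarrow> nat) \<Rightarrow> 'p monoid \<Rightarrow> nat monoid" where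
  "tmon f M = \<lparr>carrier = f ` carrier M,
     monoid.mult = (\<lambda>a b. f (inv_into (carrier M) f a \<otimes>\<^bsub>M\<^esub> inv_into (carrier M) f b)),
     one = f \<one>\<^bsub>M\<^esub>\<rparr>"

lemma tmon_group:
  assumes M: "group M" and inj: "inj_on f (carrier M)"
  shows "group (tmon f M)" "f \<in> iso M (tmon f M)"
proof -
  interpret M: group M by (rule M)
  have dec: "inv_into (carrier M) f (f p) = p" if "p \<in> carrier M" for p
    using inv_into_f_f[OF inj that] .
  have dc: "inv_into (carrier M) f a \<in> carrier M" if "a \<in> f ` carrier M" for a
    using that by (auto simp: dec)
  have mult: "f p \<otimes>\<^bsub>tmon f M\<^esub> f q = f (p \<otimes>\<^bsub>M\<^esub> q)" if "p \<in> carrier M" "q \<in> carrier M" for p q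
    using that by (simp add: tmon_def dec)
  show "group (tmon f M)"
  proof (rule groupI)
    fix x y assume "x \<in> carrier (tmon f M)" "y \<in> carrier (tmon f M)"
    then obtain p q where "p \<in> carrier M" "q \<in> carrier M" "x = f p" "y = f q" unfolding tmon_def by auto
    then show "x \<otimes>\<^bsub>tmon f M\<^esub> y \<in> carrier (tmon f M)" by (simp add: mult) (simp add: tmon_def)
  next
    show "\<one>\<^bsub>tmon f M\<^esub> \<in> carrier (tmon f M)" by (simp add: tmon_def)
  next
    fix x y z assume "x \<in> carrier (tmon f M)" "y \<in> carrier (tmon f M)" "z \<in> carrier (tmon f M)"
    then obtain p q r where "p \<in> carrier M" "q \<in> carrier M" "r \<in> carrier M" "x = f p" "y = f q" "z = f r"
      unfolding tmon_def by auto
    then show "x \<otimes>\<^bsub>tmon f M\<^esub> y \<otimes>\<^bsub>tmon f M\<^esub> z = x \<otimes>\<^bsub>tmon f M\<^esub> (y \<otimes>\<^bsub>tmon f M\<^esub> z)"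
      by (simp add: mult M.m_assoc)
  next
    fix x assume "x \<in> carrier (tmon f M)"
    then obtain p where "p \<in> carrier M" "x = f p" unfolding tmon_def by auto
    moreover have "\<one>\<^bsub>tmon f M\<^esub> = f \<one>\<^bsub>M\<^esub>" by (simp add: tmon_def)
    ultimately show "\<one>\<^bsub>tmon f M\<^esub> \<otimes>\<^bsub>tmon f M\<^esub> x = x" by (simp add: mult)
  next
    fix x assume "x \<in> carrier (tmon f M)"
    then obtain p where p: "p \<in> carrier M" "x = f p" unfolding tmon_def by auto
    have "f (inv\<^bsub>M\<^esub> p) \<in> carrier (tmon f M)" using p by (simp add: tmon_def)
    moreover have "f (inv\<^bsub>M\<^esub> p) \<otimes>\<^bsub>tmon f M\<^esub> x = \<one>\<^bsub>tmon f M\<^esub>"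
      using p by (simp add: mult) (simp add: tmon_def)
    ultimately show "\<exists>y \<in> carrier (tmon f M). y \<otimes>\<^bsub>tmon f M\<^esub> x = \<one>\<^bsub>tmon f M\<^esub>" by blast
  qed
  show "f \<in> iso M (tmon f M)"
    unfolding iso_def hom_def bij_betw_def using inj
    by (auto simp: mult) (auto simp: tmon_def)
qed


locale main = irrep G n \<rho> \<chi> for G (structure) and n \<rho> \<chi> +
  fixes enc :: "(('a \<Rightarrow> 'a) \<times> complex mat) \<Rightarrow> nat"
  assumes perfect: "derived G (carrier G) = carrier G"
    and enc_inj: "inj_on enc A0"
begin

definition N :: "'a set" where "N = char_kernel G \<chi> \<inter> grp_center G"

lemma N_iff: "z \<in> N \<longleftrightarrow> z \<in> grp_center G \<and> \<chi> z = \<chi> \<one>"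
  unfolding N_def char_kernel_def grp_center_def by auto

lemma center_carrier: "z \<in> grp_center G \<Longrightarrow> z \<in> carrier G"
  unfolding grp_center_def by auto

lemma center_comm: "z \<in> grp_center G \<Longrightarrow> g \<in> carrier G \<Longrightarrow> z \<otimes> g = g \<otimes> z"
  unfolding grp_center_def by auto

lemma N_rho: "z \<in> N \<Longrightarrow> \<rho> z = 1\<^sub>m n"
  using center_ker N_iff by blast

lemma N_carrier: "z \<in> N \<Longrightarrow> z \<in> carrier G"
  using N_iff center_carrier by blast

lemma rho_one_N:
  assumes z: "z \<in> grp_center G" and r: "\<rho> z = 1\<^sub>m n" shows "z \<in> N"
proof -
  have "\<chi> z = of_nat n" using chi[OF center_carrier[OF z]] r by (simp add: trace_one)
  then show ?thesis using N_iff z chi_one by simp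
qed

lemma N_subgroup: "subgroup N G"
proof (rule subgroupI)
  show "N \<subseteq> carrier G" using N_carrier by blast
  show "N \<noteq> {}"
  proof -
    have "\<one> \<in> grp_center G" unfolding grp_center_def by simp
    then have "\<one> \<in> N" using N_iff by simp
    then show ?thesis by blast
  qed
next
  fix a assume a: "a \<in> N"
  have ac: "a \<in> carrier G" using N_carrier[OF a] .
  have ca: "a \<in> grp_center G" using a N_iff by simp
  have "inv a \<in> grp_center G"
    unfolding grp_center_def
  proof (intro CollectI conjI ballI)
    show "inv a \<in> carrier G" using ac by simp
    fix g assume g: "g \<in> carrier G"
    have "inv a \<otimes> g = inv a \<otimes> (g \<otimes> a) \<otimes> inv a" using ac g by (simp add: m_assoc)
    also have "\<dots> = inv a \<otimes> (a \<otimes> g) \<otimes> inv a" using center_comm[OF ca g] by simp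
    also have "\<dots> = g \<otimes> inv a" using ac g by (simp add: m_assoc[symmetric])
    finally show "inv a \<otimes> g = g \<otimes> inv a" .
  qed
  moreover have "\<rho> (inv a) = 1\<^sub>m n"
  proof -
    have "\<rho> (inv a) = \<rho> (inv a) * \<rho> a" using N_rho[OF a] ac by simp
    also have "\<dots> = 1\<^sub>m n" using rho_inv1[OF ac] .
    finally show ?thesis .
  qed
  ultimately show "inv a \<in> N" by (rule rho_one_N)
next
  fix a b assume a: "a \<in> N" and b: "b \<in> N"
  have ac: "a \<in> carrier G" "b \<in> carrier G" using N_carrier a b by auto
  have ca: "a \<in> grp_center G" "b \<in> grp_center G" using a b N_iff by auto
  have "a \<otimes> b \<in> grp_center G"
    unfolding grp_center_def
  proof (intro CollectI conjI ballI)
    show "a \<otimes> b \<in> carrier G" using ac by simp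
    fix g assume g: "g \<in> carrier G"
    have "a \<otimes> b \<otimes> g = a \<otimes> (g \<otimes> b)" using ac g center_comm[OF ca(2) g] by (simp add: m_assoc)
    also have "\<dots> = (a \<otimes> g) \<otimes> b" using ac g by (simp add: m_assoc)
    also have "\<dots> = g \<otimes> (a \<otimes> b)" using ac g center_comm[OF ca(1) g] by (simp add: m_assoc)
    finally show "a \<otimes> b \<otimes> g = g \<otimes> (a \<otimes> b)" .
  qed
  moreover have "\<rho> (a \<otimes> b) = 1\<^sub>m n" using ac N_rho[OF a] N_rho[OF b] by (simp add: rho_mult)
  ultimately show "a \<otimes> b \<in> N" by (rule rho_one_N)
qed

lemma N_normal: "N \<lhd> G"
  unfolding normal_inv_iff
proof (intro conjI ballI)
  show "subgroup N G" by (rule N_subgroup)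
  fix x h assume x: "x \<in> carrier G" and h: "h \<in> N"
  have hc: "h \<in> carrier G" using N_carrier[OF h] .
  have "x \<otimes> h \<otimes> inv x = h \<otimes> x \<otimes> inv x" using center_comm[of h x] N_iff h x by auto
  also have "\<dots> = h" using x hc by (simp add: m_assoc)
  finally show "x \<otimes> h \<otimes> inv x \<in> N" using h by simp
qed

abbreviation "Gb \<equiv> G Mod N"

lemma Gb_group: "group Gb"
  using normal.factorgroup_is_group[OF N_normal] .

lemma Gb_carrier: "carrier Gb = {N #> g | g. g \<in> carrier G}"
  unfolding FactGroup_def RCOSETS_def by auto

definition \<iota>0 :: "'a set \<Rightarrow> ('a \<Rightarrow> 'a) \<times> complex mat" where
  "\<iota>0 X = (inn (SOME x. x \<in> X), \<rho> (SOME x. x \<in> X))"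

lemma inn_central_shift:
  assumes z: "z \<in> grp_center G" and g: "g \<in> carrier G"
  shows "inn (z \<otimes> g) = inn g"
proof (rule ext)
  fix y
  have zc: "z \<in> carrier G" using center_carrier[OF z] .
  show "inn (z \<otimes> g) y = inn g y"
  proof (cases "y \<in> carrier G")
    case True
    have "z \<otimes> g \<otimes> y \<otimes> inv (z \<otimes> g) = z \<otimes> (g \<otimes> y \<otimes> inv g) \<otimes> inv z"
      using zc g True by (simp add: m_assoc inv_mult_group)
    also have "\<dots> = g \<otimes> y \<otimes> inv g"
      using zc g True center_comm[OF z, of "g \<otimes> y \<otimes> inv g"] by (simp add: m_assoc)
    finally show ?thesis using True by (simp add: inn_apply)
  next
    case False
    then show ?thesis by (simp add: inn_def)
  qed
qed

lemma \<iota>0_coset: assumes g: "g \<in> carrier G" shows "\<iota>0 (N #> g) = (inn g, \<rho> g)"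
proof -
  have "g \<in> N #> g" using rcos_self[OF g N_subgroup] .
  then have "(SOME x. x \<in> N #> g) \<in> N #> g" by (rule someI)
  then obtain z where z: "z \<in> N" and xe: "(SOME x. x \<in> N #> g) = z \<otimes> g"
    unfolding r_coset_def by auto
  have zc: "z \<in> grp_center G" using z N_iff by simp
  have "inn (z \<otimes> g) = inn g" by (rule inn_central_shift[OF zc g])
  moreover have "\<rho> (z \<otimes> g) = \<rho> g" using N_rho[OF z] N_carrier[OF z] g by (simp add: rho_mult)
  ultimately show ?thesis unfolding \<iota>0_def xe by simp
qed

end

context main
begin

definition AN :: "nat monoid" where "AN = tmon enc A0M"
definition dec :: "nat \<Rightarrow> ('a \<Rightarrow> 'a) \<times> complex mat" where "dec = inv_into A0 enc"

lemma A0M_carrier[simp]: "carrier A0M = A0" unfolding A0M_def by simp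
lemma A0M_mult[simp]: "x \<otimes>\<^bsub>A0M\<^esub> y = m0 x y" unfolding A0M_def by simp
lemma A0M_one[simp]: "\<one>\<^bsub>A0M\<^esub> = (\<one>\<^bsub>H\<^esub>, 1\<^sub>m n)" unfolding A0M_def by simp

lemma AN_group: "group AN"
  unfolding AN_def using tmon_group(1)[OF A0M_group] enc_inj by simp

lemma enc_iso: "enc \<in> iso A0M AN"
  unfolding AN_def using tmon_group(2)[OF A0M_group] enc_inj by simp

lemma enc_hom: "group_hom A0M AN enc"
  using enc_iso A0M_group AN_group unfolding group_hom_def group_hom_axioms_def iso_def by auto

lemma AN_carrier: "carrier AN = enc ` A0"
  unfolding AN_def tmon_def by simp

lemma dec_enc[simp]: "p \<in> A0 \<Longrightarrow> dec (enc p) = p"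
  unfolding dec_def using enc_inj by (simp add: inv_into_f_f)

lemma dec_A0: "a \<in> carrier AN \<Longrightarrow> dec a \<in> A0"
  unfolding AN_carrier by auto

lemma enc_dec: "a \<in> carrier AN \<Longrightarrow> enc (dec a) = a"
  unfolding AN_carrier by auto

lemma enc_in: "p \<in> A0 \<Longrightarrow> enc p \<in> carrier AN"
  unfolding AN_carrier by auto

lemma AN_mult: "p \<in> A0 \<Longrightarrow> q \<in> A0 \<Longrightarrow> enc p \<otimes>\<^bsub>AN\<^esub> enc q = enc (m0 p q)"
  using group_hom.hom_mult[OF enc_hom] by simp

lemma AN_inv: "p \<in> A0 \<Longrightarrow> inv\<^bsub>AN\<^esub> (enc p) = enc (inv\<^bsub>A0M\<^esub> p)"
  using group_hom.hom_inv[OF enc_hom] by simp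

lemma AN_one: "\<one>\<^bsub>AN\<^esub> = enc (\<one>\<^bsub>H\<^esub>, 1\<^sub>m n)"
  using group_hom.hom_one[OF enc_hom] by simp

definition \<iota>g :: "'a \<Rightarrow> nat" where "\<iota>g g = enc (inn g, \<rho> g)"
definition \<iota> :: "'a set \<Rightarrow> nat" where "\<iota> X = enc (\<iota>0 X)"

lemma \<iota>_coset: "g \<in> carrier G \<Longrightarrow> \<iota> (N #> g) = \<iota>g g"
  unfolding \<iota>_def \<iota>g_def by (simp add: \<iota>0_coset)

lemma \<iota>g_in: "g \<in> carrier G \<Longrightarrow> \<iota>g g \<in> carrier AN"
  unfolding \<iota>g_def using inn_pair_A0 by (simp add: enc_in)

lemma \<iota>_image: "\<iota> ` carrier Gb = \<iota>g ` carrier G"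
proof -
  have "{N #> g | g. g \<in> carrier G} = (\<lambda>g. N #> g) ` carrier G" by auto
  then have "\<iota> ` carrier Gb = (\<lambda>g. \<iota> (N #> g)) ` carrier G" unfolding Gb_carrier by (simp add: image_image)
  also have "\<dots> = \<iota>g ` carrier G" using \<iota>_coset by (rule image_cong[OF refl])
  finally show ?thesis .
qed

lemma conj_pair:
  assumes p: "(\<alpha>, M) \<in> A0" and g: "g \<in> carrier G"
  shows "m0 (m0 (\<alpha>, M) (inn g, \<rho> g)) (inv\<^bsub>A0M\<^esub> (\<alpha>, M)) = (inn (\<alpha> g), \<rho> (\<alpha> g))"
proof -
  interpret Hg: group H by (rule H_group)
  have a: "\<alpha> \<in> carrier H" and M: "M \<in> carrier_mat n n" and Mi: "\<And>g. g \<in> carrier G \<Longrightarrow> M * \<rho> g = \<rho> (\<alpha> g) * M"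
    using p unfolding A0_iff by auto
  obtain B where B: "B \<in> carrier_mat n n" "M * B = 1\<^sub>m n" "B * M = 1\<^sub>m n"
    using det_nz_inverse[OF M A0_det_nz[OF p]] by blast
  have ag: "\<alpha> g \<in> carrier G" using H_elem(3)[OF a g] .
  have "M * \<rho> g * B = \<rho> (\<alpha> g) * M * B" using Mi[OF g] by simp
  also have "\<dots> = \<rho> (\<alpha> g) * (M * B)" using M B(1) ag by (simp add: assoc_mult_mat[of _ n n _ n _ n])
  also have "\<dots> = \<rho> (\<alpha> g)" using B(2) ag by simp
  finally have mat: "M * \<rho> g * B = \<rho> (\<alpha> g)" .
  show ?thesis
    unfolding A0M_inv[OF p B] m0_pair using conj_inn[OF a g] mat by simp
qed

lemma conj_AN:
  assumes a: "a \<in> carrier AN" and g: "g \<in> carrier G"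
  shows "a \<otimes>\<^bsub>AN\<^esub> \<iota>g g \<otimes>\<^bsub>AN\<^esub> inv\<^bsub>AN\<^esub> a = \<iota>g (fst (dec a) g)"
proof -
  interpret A0g: group A0M by (rule A0M_group)
  obtain \<alpha> M where de: "dec a = (\<alpha>, M)" by (cases "dec a")
  have p: "(\<alpha>, M) \<in> A0" using dec_A0[OF a] de by simp
  have ae: "a = enc (\<alpha>, M)" using enc_dec[OF a] de by simp
  have q: "(inn g, \<rho> g) \<in> A0" using inn_pair_A0[OF g] .
  have ip: "inv\<^bsub>A0M\<^esub> (\<alpha>, M) \<in> A0" using A0g.inv_closed[of "(\<alpha>, M)"] p by simp
  have "a \<otimes>\<^bsub>AN\<^esub> \<iota>g g \<otimes>\<^bsub>AN\<^esub> inv\<^bsub>AN\<^esub> a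
      = enc (m0 (m0 (\<alpha>, M) (inn g, \<rho> g)) (inv\<^bsub>A0M\<^esub> (\<alpha>, M)))"
    unfolding ae \<iota>g_def AN_inv[OF p] using p q ip m0_closed
    by (simp add: AN_mult)
  also have "\<dots> = \<iota>g (\<alpha> g)" unfolding conj_pair[OF p g] \<iota>g_def ..
  finally show ?thesis using de by simp
qed

end

context main
begin

lemma \<iota>g_mult: "x \<in> carrier G \<Longrightarrow> y \<in> carrier G \<Longrightarrow> \<iota>g x \<otimes>\<^bsub>AN\<^esub> \<iota>g y = \<iota>g (x \<otimes> y)"
  unfolding \<iota>g_def using inn_pair_A0 by (simp add: AN_mult m0_pair inn_mult rho_mult)

lemma Gb_elem: "X \<in> carrier Gb \<Longrightarrow> \<exists>x \<in> carrier G. X = N #> x"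
  unfolding Gb_carrier by auto

lemma \<iota>_hom: "\<iota> \<in> hom Gb AN"
proof (rule homI)
  fix X assume "X \<in> carrier Gb"
  then obtain x where x: "x \<in> carrier G" "X = N #> x" using Gb_elem by blast
  then show "\<iota> X \<in> carrier AN" using \<iota>_coset \<iota>g_in by simp
next
  fix X Y assume "X \<in> carrier Gb" "Y \<in> carrier Gb"
  then obtain x y where x: "x \<in> carrier G" "X = N #> x" and y: "y \<in> carrier G" "Y = N #> y"
    using Gb_elem by blast
  have "X \<otimes>\<^bsub>Gb\<^esub> Y = N #> (x \<otimes> y)"
    unfolding x y FactGroup_def using normal.rcos_sum[OF N_normal x(1) y(1)] by simp
  then show "\<iota> (X \<otimes>\<^bsub>Gb\<^esub> Y) = \<iota> X \<otimes>\<^bsub>AN\<^esub> \<iota> Y"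
    using x y by (simp add: \<iota>_coset \<iota>g_mult)
qed

lemma \<iota>_inj: "inj_on \<iota> (carrier Gb)"
proof (rule inj_onI)
  fix X Y assume "X \<in> carrier Gb" "Y \<in> carrier Gb" and e: "\<iota> X = \<iota> Y"
  then obtain x y where x: "x \<in> carrier G" "X = N #> x" and y: "y \<in> carrier G" "Y = N #> y"
    using Gb_elem by blast
  have "\<iota>g x = \<iota>g y" using e x y by (simp add: \<iota>_coset)
  then have "(inn x, \<rho> x) = (inn y, \<rho> y)"
    unfolding \<iota>g_def using inj_onD[OF enc_inj _ inn_pair_A0[OF x(1)] inn_pair_A0[OF y(1)]] by simp
  then have ie: "inn x = inn y" and re: "\<rho> x = \<rho> y" by auto
  define w where "w = inv y \<otimes> x"
  have wc: "w \<in> carrier G" unfolding w_def using x y by simp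
  have "w \<in> grp_center G"
    unfolding grp_center_def
  proof (intro CollectI conjI ballI)
    show "w \<in> carrier G" by (rule wc)
    fix t assume t: "t \<in> carrier G"
    have et: "x \<otimes> t \<otimes> inv x = y \<otimes> t \<otimes> inv y" using fun_cong[OF ie, of t] t by (simp add: inn_apply)
    have "w \<otimes> t = inv y \<otimes> (x \<otimes> t \<otimes> inv x) \<otimes> x" unfolding w_def using x y t by (simp add: m_assoc)
    also have "\<dots> = inv y \<otimes> (y \<otimes> t \<otimes> inv y) \<otimes> x" using et by simp
    also have "\<dots> = t \<otimes> w" unfolding w_def using x y t by (simp add: m_assoc)
    finally show "w \<otimes> t = t \<otimes> w" .
  qed
  moreover have "\<rho> w = 1\<^sub>m n" unfolding w_def using x y re by (simp add: rho_mult rho_inv1)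
  ultimately have wN: "w \<in> N" by (rule rho_one_N)
  have "x = y \<otimes> w" unfolding w_def using x y by (simp add: m_assoc[symmetric])
  also have "\<dots> = w \<otimes> y" using center_comm[of w y] wN N_iff y(1) by simp
  finally have "x \<in> N #> y" using rcosI[OF wN _ y(1)] N_carrier by auto
  then have "N #> y = N #> x" using repr_independence[OF _ y(1) N_subgroup] by blast
  then show "X = Y" using x y by simp
qed

lemma \<iota>_mon: "\<iota> \<in> mon Gb AN"
  unfolding mon_def using \<iota>_hom \<iota>_inj by simp

lemma \<iota>_group_hom: "group_hom Gb AN \<iota>"
  unfolding group_hom_def group_hom_axioms_def using Gb_group AN_group \<iota>_hom by simp

lemma fst_dec_H: "a \<in> carrier AN \<Longrightarrow> fst (dec a) \<in> carrier H"
  using dec_A0 unfolding A0_def by auto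

lemma \<iota>_normal: "\<iota> ` carrier Gb \<lhd> AN"
proof -
  interpret AG: group AN by (rule AN_group)
  show ?thesis
    unfolding AG.normal_inv_iff
  proof (intro conjI ballI)
    show "subgroup (\<iota> ` carrier Gb) AN" using group_hom.img_is_subgroup[OF \<iota>_group_hom] .
    fix a h assume a: "a \<in> carrier AN" and h: "h \<in> \<iota> ` carrier Gb"
    then obtain g where g: "g \<in> carrier G" "h = \<iota>g g" unfolding \<iota>_image by auto
    have "a \<otimes>\<^bsub>AN\<^esub> h \<otimes>\<^bsub>AN\<^esub> inv\<^bsub>AN\<^esub> a = \<iota>g (fst (dec a) g)" using conj_AN[OF a g(1)] g by simp
    moreover have "fst (dec a) g \<in> carrier G" using H_elem(3)[OF fst_dec_H[OF a] g(1)] .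
    ultimately show "a \<otimes>\<^bsub>AN\<^esub> h \<otimes>\<^bsub>AN\<^esub> inv\<^bsub>AN\<^esub> a \<in> \<iota> ` carrier Gb" unfolding \<iota>_image by auto
  qed
qed

lemma perfect_trivial:
  assumes a: "\<alpha> \<in> carrier H"
    and hyp: "\<And>g t. g \<in> carrier G \<Longrightarrow> t \<in> carrier G \<Longrightarrow> \<alpha> g \<otimes> t \<otimes> inv (\<alpha> g) = g \<otimes> t \<otimes> inv g"
  shows "\<alpha> = \<one>\<^bsub>H\<^esub>"
proof -
  interpret Hg: group H by (rule H_group)
  interpret gh: group_hom G G \<alpha> using H_elem(2)[OF a] by unfold_locales
  define S where "S = {g \<in> carrier G. \<alpha> g = g}"
  have sub: "subgroup S G"
  proof (rule subgroupI)
    show "S \<subseteq> carrier G" unfolding S_def by auto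
    have "\<one> \<in> S" unfolding S_def by simp
    then show "S \<noteq> {}" by blast
  next
    fix x assume "x \<in> S"
    then show "inv x \<in> S" unfolding S_def by simp
  next
    fix x y assume "x \<in> S" "y \<in> S"
    then show "x \<otimes> y \<in> S" unfolding S_def by simp
  qed
  have "derived_set G (carrier G) \<subseteq> S"
  proof
    fix c assume "c \<in> derived_set G (carrier G)"
    then obtain x y where x: "x \<in> carrier G" and y: "y \<in> carrier G" and ce: "c = x \<otimes> y \<otimes> inv x \<otimes> inv y"
      by auto
    have ax: "\<alpha> x \<in> carrier G" and ay: "\<alpha> y \<in> carrier G" using x y by auto
    have h1: "\<alpha> x \<otimes> \<alpha> y \<otimes> inv (\<alpha> x) = x \<otimes> \<alpha> y \<otimes> inv x" by (rule hyp[OF x ay])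
    have h2: "\<alpha> y \<otimes> inv x \<otimes> inv (\<alpha> y) = y \<otimes> inv x \<otimes> inv y" using hyp[OF y] x by simp
    have "\<alpha> c = \<alpha> x \<otimes> \<alpha> y \<otimes> inv (\<alpha> x) \<otimes> inv (\<alpha> y)" unfolding ce using x y by simp
    also have "\<dots> = x \<otimes> \<alpha> y \<otimes> inv x \<otimes> inv (\<alpha> y)" using h1 by simp
    also have "\<dots> = x \<otimes> (\<alpha> y \<otimes> inv x \<otimes> inv (\<alpha> y))" using x ay by (simp add: m_assoc)
    also have "\<dots> = x \<otimes> (y \<otimes> inv x \<otimes> inv y)" using h2 by simp
    also have "\<dots> = c" unfolding ce using x y by (simp add: m_assoc)
    finally have "\<alpha> c = c" .
    moreover have "c \<in> carrier G" unfolding ce using x y by simp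
    ultimately show "c \<in> S" unfolding S_def by simp
  qed
  then have "derived G (carrier G) \<subseteq> S"
    unfolding derived_def by (rule generate_subgroup_incl[OF _ sub])
  then have all: "\<And>g. g \<in> carrier G \<Longrightarrow> \<alpha> g = g" using perfect unfolding S_def by auto
  show ?thesis by (rule H_eqI[OF a Hg.one_closed]) (simp add: all H_one_apply)
qed

definition hA :: "nat \<Rightarrow> 'a \<Rightarrow> 'a" where "hA a = fst (dec a)"

lemma hA_hom: "group_hom AN H hA"
proof -
  have "hA \<in> hom AN H"
  proof (rule homI)
    fix a assume "a \<in> carrier AN" then show "hA a \<in> carrier H" unfolding hA_def by (rule fst_dec_H)
  next
    fix a b assume a: "a \<in> carrier AN" and b: "b \<in> carrier AN"
    have "a \<otimes>\<^bsub>AN\<^esub> b = enc (m0 (dec a) (dec b))"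
      using AN_mult[OF dec_A0[OF a] dec_A0[OF b]] enc_dec a b by simp
    moreover have "m0 (dec a) (dec b) \<in> A0"
      using m0_closed[of "fst (dec a)" "snd (dec a)" "fst (dec b)" "snd (dec b)"] dec_A0 a b by simp
    ultimately show "hA (a \<otimes>\<^bsub>AN\<^esub> b) = hA a \<otimes>\<^bsub>H\<^esub> hA b" unfolding hA_def by (simp add: m0_def)
  qed
  then show ?thesis unfolding group_hom_def group_hom_axioms_def using AN_group H_group by simp
qed

lemma hA_surj: "hA ` carrier AN = carrier H"
proof
  show "hA ` carrier AN \<subseteq> carrier H" unfolding hA_def using fst_dec_H by auto
  show "carrier H \<subseteq> hA ` carrier AN"
  proof
    fix \<alpha> assume "\<alpha> \<in> carrier H"
    then obtain M where p: "(\<alpha>, M) \<in> A0" using fst_A0_surj by blast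
    then have "hA (enc (\<alpha>, M)) = \<alpha>" unfolding hA_def by simp
    then show "\<alpha> \<in> hA ` carrier AN" using enc_in[OF p] by force
  qed
qed

abbreviation "C \<equiv> grp_centralizer AN (\<iota> ` carrier Gb)"

lemma C_sub_ker: "C \<subseteq> kernel AN H hA"
proof
  fix a assume aC: "a \<in> C"
  have a: "a \<in> carrier AN" and comm: "\<And>h. h \<in> \<iota> ` carrier Gb \<Longrightarrow> a \<otimes>\<^bsub>AN\<^esub> h = h \<otimes>\<^bsub>AN\<^esub> a"
    using aC unfolding grp_centralizer_def by auto
  obtain \<alpha> M where de: "dec a = (\<alpha>, M)" by (cases "dec a")
  have p: "(\<alpha>, M) \<in> A0" using dec_A0[OF a] de by simp
  have ae: "a = enc (\<alpha>, M)" using enc_dec[OF a] de by simp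
  have al: "\<alpha> \<in> carrier H" using p unfolding A0_iff by simp
  interpret Hg: group H by (rule H_group)
  interpret gh: group_hom G G \<alpha> using H_elem(2)[OF al] by unfold_locales
  have cm: "\<alpha> \<otimes>\<^bsub>H\<^esub> inn g = inn g \<otimes>\<^bsub>H\<^esub> \<alpha>" if g: "g \<in> carrier G" for g
  proof -
    have "a \<otimes>\<^bsub>AN\<^esub> \<iota>g g = \<iota>g g \<otimes>\<^bsub>AN\<^esub> a" using comm \<iota>_image g by auto
    then have "enc (m0 (\<alpha>, M) (inn g, \<rho> g)) = enc (m0 (inn g, \<rho> g) (\<alpha>, M))"
      unfolding ae \<iota>g_def using p inn_pair_A0[OF g] by (simp add: AN_mult)
    then have "m0 (\<alpha>, M) (inn g, \<rho> g) = m0 (inn g, \<rho> g) (\<alpha>, M)"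
      using inj_onD[OF enc_inj] m0_closed p inn_pair_A0[OF g] by (metis surj_pair)
    then show ?thesis by (simp add: m0_pair)
  qed
  have "\<alpha> = \<one>\<^bsub>H\<^esub>"
  proof (rule perfect_trivial[OF al])
    fix g t assume g: "g \<in> carrier G" and t: "t \<in> carrier G"
    define y where "y = (inv\<^bsub>H\<^esub> \<alpha>) t"
    have y: "y \<in> carrier G" unfolding y_def using H_elem(3)[OF Hg.inv_closed[OF al] t] .
    have ay: "\<alpha> y = t" unfolding y_def using H_inv_apply(1)[OF al t] .
    have "(\<alpha> \<otimes>\<^bsub>H\<^esub> inn g) y = (inn g \<otimes>\<^bsub>H\<^esub> \<alpha>) y" using cm[OF g] by simp
    then have "\<alpha> (inn g y) = inn g (\<alpha> y)"
      using H_mult_apply[OF al inn_H[OF g] y] H_mult_apply[OF inn_H[OF g] al y] by simp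
    then have "\<alpha> (g \<otimes> y \<otimes> inv g) = g \<otimes> t \<otimes> inv g" using y t ay by (simp add: inn_apply)
    then show "\<alpha> g \<otimes> t \<otimes> inv (\<alpha> g) = g \<otimes> t \<otimes> inv g" using g y ay by simp
  qed
  then show "a \<in> kernel AN H hA" unfolding kernel_def hA_def using a de by simp
qed

lemma smult_one_left: "(L::complex mat) \<in> carrier_mat n n \<Longrightarrow> (c \<cdot>\<^sub>m 1\<^sub>m n) * L = c \<cdot>\<^sub>m L"
  by (subst mult_smult_assoc_mat[of _ n n _ n]) auto

lemma smult_one_right: "(L::complex mat) \<in> carrier_mat n n \<Longrightarrow> L * (c \<cdot>\<^sub>m 1\<^sub>m n) = c \<cdot>\<^sub>m L"
  by (subst mult_smult_distrib[of _ n n _ n]) auto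

lemma ker_sub_center: "kernel AN H hA \<subseteq> grp_center AN"
proof
  interpret Hg: group H by (rule H_group)
  fix a assume ak: "a \<in> kernel AN H hA"
  have a: "a \<in> carrier AN" and h1: "fst (dec a) = \<one>\<^bsub>H\<^esub>" using ak unfolding kernel_def hA_def by auto
  obtain \<alpha> M where de: "dec a = (\<alpha>, M)" by (cases "dec a")
  have p: "(\<alpha>, M) \<in> A0" using dec_A0[OF a] de by simp
  have ae: "a = enc (\<alpha>, M)" using enc_dec[OF a] de by simp
  have a1: "\<alpha> = \<one>\<^bsub>H\<^esub>" using h1 de by simp
  have M: "M \<in> carrier_mat n n" using p unfolding A0_iff by simp
  have "M * \<rho> g = \<rho> g * M" if g: "g \<in> carrier G" for g
    using p g unfolding A0_iff a1 by (simp add: H_one_apply)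
  then obtain c where c: "M = c \<cdot>\<^sub>m 1\<^sub>m n" using schur[OF M] by blast
  show "a \<in> grp_center AN"
    unfolding grp_center_def
  proof (intro CollectI conjI ballI)
    show "a \<in> carrier AN" by (rule a)
    fix b assume b: "b \<in> carrier AN"
    obtain \<beta> L where db: "dec b = (\<beta>, L)" by (cases "dec b")
    have q: "(\<beta>, L) \<in> A0" using dec_A0[OF b] db by simp
    have be: "b = enc (\<beta>, L)" using enc_dec[OF b] db by simp
    have bl: "\<beta> \<in> carrier H" "L \<in> carrier_mat n n" using q unfolding A0_iff by auto
    have "a \<otimes>\<^bsub>AN\<^esub> b = enc (\<beta>, c \<cdot>\<^sub>m L)"
      unfolding ae be using p q bl by (simp add: AN_mult m0_pair a1 c smult_one_left)
    moreover have "b \<otimes>\<^bsub>AN\<^esub> a = enc (\<beta>, c \<cdot>\<^sub>m L)"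
      unfolding ae be using p q bl by (simp add: AN_mult m0_pair a1 c smult_one_right)
    ultimately show "a \<otimes>\<^bsub>AN\<^esub> b = b \<otimes>\<^bsub>AN\<^esub> a" by simp
  qed
qed

lemma center_sub_C: "grp_center AN \<subseteq> C"
  unfolding grp_center_def grp_centralizer_def
  using group_hom.img_is_subgroup[OF \<iota>_group_hom] subgroup.subset by fastforce

lemma C_eq_ker: "C = kernel AN H hA"
  using C_sub_ker ker_sub_center center_sub_C by blast

lemma C_eq_center: "C = grp_center AN"
  using C_sub_ker ker_sub_center center_sub_C by blast

definition \<phi> :: "nat set \<Rightarrow> 'a \<Rightarrow> 'a" where "\<phi> X = the_elem (hA ` X)"

lemma \<phi>_iso: "\<phi> \<in> iso (AN Mod C) H"
  unfolding C_eq_ker \<phi>_def using group_hom.FactGroup_iso_set[OF hA_hom hA_surj] .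

lemma \<phi>_coset: assumes a: "a \<in> carrier AN" shows "\<phi> (C #>\<^bsub>AN\<^esub> a) = hA a"
proof -
  interpret AG: group AN by (rule AN_group)
  interpret Hg: group H by (rule H_group)
  interpret hh: group_hom AN H hA by (rule hA_hom)
  have "hA ` (C #>\<^bsub>AN\<^esub> a) = {hA a}"
  proof
    show "hA ` (C #>\<^bsub>AN\<^esub> a) \<subseteq> {hA a}"
    proof
      fix y assume "y \<in> hA ` (C #>\<^bsub>AN\<^esub> a)"
      then obtain k where k: "k \<in> C" "y = hA (k \<otimes>\<^bsub>AN\<^esub> a)" unfolding r_coset_def by auto
      have kk: "k \<in> carrier AN" "hA k = \<one>\<^bsub>H\<^esub>" using k(1) unfolding C_eq_ker kernel_def by auto
      then show "y \<in> {hA a}" using k a by simp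
    qed
    have "\<one>\<^bsub>AN\<^esub> \<in> C" unfolding C_eq_ker kernel_def by simp
    then have "\<one>\<^bsub>AN\<^esub> \<otimes>\<^bsub>AN\<^esub> a \<in> C #>\<^bsub>AN\<^esub> a" unfolding r_coset_def by auto
    then show "{hA a} \<subseteq> hA ` (C #>\<^bsub>AN\<^esub> a)" using a by force
  qed
  then show ?thesis unfolding \<phi>_def by simp
qed

definition \<psi> :: "nat \<Rightarrow> complex" where "\<psi> a = mat_trace (snd (dec a))"

lemma \<psi>_irr: "irr_char AN \<psi>"
proof -
  define \<rho>A where "\<rho>A = (\<lambda>a. snd (dec a))"
  have rep: "representation AN n \<rho>A"
    unfolding representation_def
  proof (intro conjI ballI)
    fix a assume a: "a \<in> carrier AN"
    show "\<rho>A a \<in> carrier_mat n n" unfolding \<rho>A_def using dec_A0[OF a] unfolding A0_def by auto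
  next
    show "\<rho>A \<one>\<^bsub>AN\<^esub> = 1\<^sub>m n" unfolding \<rho>A_def AN_one using one_A0 by simp
  next
    fix a b assume a: "a \<in> carrier AN" and b: "b \<in> carrier AN"
    have "a \<otimes>\<^bsub>AN\<^esub> b = enc (m0 (dec a) (dec b))"
      using AN_mult[OF dec_A0[OF a] dec_A0[OF b]] enc_dec a b by simp
    moreover have "m0 (dec a) (dec b) \<in> A0"
      using m0_closed[of "fst (dec a)" "snd (dec a)" "fst (dec b)" "snd (dec b)"] dec_A0 a b by simp
    ultimately show "\<rho>A (a \<otimes>\<^bsub>AN\<^esub> b) = \<rho>A a * \<rho>A b" unfolding \<rho>A_def by (simp add: m0_def)
  qed
  have "irreducible_rep AN n \<rho>A"
    unfolding irreducible_rep_def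
  proof (intro conjI allI impI)
    show "representation AN n \<rho>A" by (rule rep)
    show "0 < n" by (rule npos)
    fix W assume W: "vec_subspace n W \<and> (\<forall>g\<in>carrier AN. \<forall>w\<in>W. \<rho>A g *\<^sub>v w \<in> W)"
    have "\<rho> g *\<^sub>v w \<in> W" if g: "g \<in> carrier G" and w: "w \<in> W" for g w
    proof -
      have "\<rho>A (\<iota>g g) = \<rho> g" unfolding \<rho>A_def \<iota>g_def using inn_pair_A0[OF g] by simp
      then show ?thesis using W \<iota>g_in[OF g] w by metis
    qed
    then show "W = {0\<^sub>v n} \<or> W = carrier_vec n" using invariant W by blast
  qed
  then show ?thesis unfolding irr_char_def \<psi>_def \<rho>A_def by blast
qed

lemma \<psi>_ext: "g \<in> carrier G \<Longrightarrow> \<psi> (\<iota> (N #> g)) = \<chi> g"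
  unfolding \<psi>_def using inn_pair_A0 by (simp add: \<iota>_coset \<iota>g_def chi)

end

context main
begin

lemma main_result:
  "let N = char_kernel G \<chi> \<inter> grp_center G; Gb = G Mod N in
    \<exists>(A :: nat monoid) \<iota> \<phi>. group A \<and> finite (carrier A) \<and>
       \<iota> \<in> mon Gb A \<and> \<iota> ` carrier Gb \<lhd> A \<and>
       \<phi> \<in> iso (A Mod grp_centralizer A (\<iota> ` carrier Gb)) (aut_stab G \<chi>) \<and>
       (\<forall>a \<in> carrier A. \<forall>g \<in> carrier G.
          a \<otimes>\<^bsub>A\<^esub> \<iota> (N #>\<^bsub>G\<^esub> g) \<otimes>\<^bsub>A\<^esub> inv\<^bsub>A\<^esub> a
            = \<iota> (N #>\<^bsub>G\<^esub> (\<phi> (grp_centralizer A (\<iota> ` carrier Gb) #>\<^bsub>A\<^esub> a) g))) \<and>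
       grp_centralizer A (\<iota> ` carrier Gb) = grp_center A \<and>
       (\<exists>\<psi>. irr_char A \<psi> \<and> (\<forall>g \<in> carrier G. \<psi> (\<iota> (N #>\<^bsub>G\<^esub> g)) = \<chi> g))"
  unfolding Let_def N_def[symmetric]
proof (intro exI conjI)
  show "group AN" by (rule AN_group)
  show "finite (carrier AN)" unfolding AN_carrier using finite_A0 by simp
  show "\<iota> \<in> mon Gb AN" by (rule \<iota>_mon)
  show "\<iota> ` carrier Gb \<lhd> AN" by (rule \<iota>_normal)
  show "\<phi> \<in> iso (AN Mod C) H" by (rule \<phi>_iso)
  show "\<forall>a \<in> carrier AN. \<forall>g \<in> carrier G.
          a \<otimes>\<^bsub>AN\<^esub> \<iota> (N #> g) \<otimes>\<^bsub>AN\<^esub> inv\<^bsub>AN\<^esub> a = \<iota> (N #> (\<phi> (C #>\<^bsub>AN\<^esub> a) g))"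
  proof (intro ballI)
    fix a g assume a: "a \<in> carrier AN" and g: "g \<in> carrier G"
    have hg: "hA a g \<in> carrier G" unfolding hA_def using H_elem(3)[OF fst_dec_H[OF a] g] .
    have "a \<otimes>\<^bsub>AN\<^esub> \<iota> (N #> g) \<otimes>\<^bsub>AN\<^esub> inv\<^bsub>AN\<^esub> a = \<iota>g (hA a g)"
      using conj_AN[OF a g] \<iota>_coset[OF g] by (simp add: hA_def)
    also have "\<dots> = \<iota> (N #> hA a g)" using \<iota>_coset[OF hg] by simp
    also have "hA a = \<phi> (C #>\<^bsub>AN\<^esub> a)" using \<phi>_coset[OF a] by simp
    finally show "a \<otimes>\<^bsub>AN\<^esub> \<iota> (N #> g) \<otimes>\<^bsub>AN\<^esub> inv\<^bsub>AN\<^esub> a = \<iota> (N #> (\<phi> (C #>\<^bsub>AN\<^esub> a) g))" .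
  qed
  show "C = grp_center AN" by (rule C_eq_center)
  show "irr_char AN \<psi>" by (rule \<psi>_irr)
  show "\<forall>g \<in> carrier G. \<psi> (\<iota> (N #> g)) = \<chi> g" using \<psi>_ext by blast
qed

end

lemma center_p_part_normal:
  assumes Y: "group Y" shows "center_p_part p Y \<lhd> Y"
proof -
  interpret Y: group Y by (rule Y)
  let ?P = "center_p_part p Y"
  have cc: "z \<in> carrier Y" "\<And>g. g \<in> carrier Y \<Longrightarrow> z \<otimes>\<^bsub>Y\<^esub> g = g \<otimes>\<^bsub>Y\<^esub> z" if "z \<in> ?P" for z
    using that unfolding center_p_part_def grp_center_def by auto
  have sub: "subgroup ?P Y"
  proof (rule Y.subgroupI)
    show "?P \<subseteq> carrier Y" using cc by blast
    have "\<one>\<^bsub>Y\<^esub> \<in> ?P" unfolding center_p_part_def grp_center_def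
      by (auto intro!: exI[of _ 0])
    then show "?P \<noteq> {}" by blast
  next
    fix a assume a: "a \<in> ?P"
    obtain k where k: "a [^]\<^bsub>Y\<^esub> (p ^ k) = \<one>\<^bsub>Y\<^esub>" using a unfolding center_p_part_def by auto
    have ac: "a \<in> carrier Y" using cc[OF a] by simp
    have "inv\<^bsub>Y\<^esub> a \<otimes>\<^bsub>Y\<^esub> g = g \<otimes>\<^bsub>Y\<^esub> inv\<^bsub>Y\<^esub> a" if g: "g \<in> carrier Y" for g
    proof -
      have "inv\<^bsub>Y\<^esub> a \<otimes>\<^bsub>Y\<^esub> g = inv\<^bsub>Y\<^esub> a \<otimes>\<^bsub>Y\<^esub> (g \<otimes>\<^bsub>Y\<^esub> a) \<otimes>\<^bsub>Y\<^esub> inv\<^bsub>Y\<^esub> a"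
        using ac g by (simp add: Y.m_assoc)
      also have "\<dots> = inv\<^bsub>Y\<^esub> a \<otimes>\<^bsub>Y\<^esub> (a \<otimes>\<^bsub>Y\<^esub> g) \<otimes>\<^bsub>Y\<^esub> inv\<^bsub>Y\<^esub> a" using cc(2)[OF a g] by simp
      also have "\<dots> = g \<otimes>\<^bsub>Y\<^esub> inv\<^bsub>Y\<^esub> a" using ac g by (simp add: Y.m_assoc[symmetric])
      finally show ?thesis .
    qed
    moreover have "inv\<^bsub>Y\<^esub> a [^]\<^bsub>Y\<^esub> (p ^ k) = \<one>\<^bsub>Y\<^esub>" using Y.nat_pow_inv[OF ac] k by simp
    ultimately show "inv\<^bsub>Y\<^esub> a \<in> ?P" unfolding center_p_part_def grp_center_def using ac by auto
  next
    fix a b assume a: "a \<in> ?P" and b: "b \<in> ?P"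
    obtain k where k: "a [^]\<^bsub>Y\<^esub> (p ^ k) = \<one>\<^bsub>Y\<^esub>" using a unfolding center_p_part_def by auto
    obtain l where l: "b [^]\<^bsub>Y\<^esub> (p ^ l) = \<one>\<^bsub>Y\<^esub>" using b unfolding center_p_part_def by auto
    have ac: "a \<in> carrier Y" and bc: "b \<in> carrier Y" using cc a b by auto
    have "a \<otimes>\<^bsub>Y\<^esub> b \<otimes>\<^bsub>Y\<^esub> g = g \<otimes>\<^bsub>Y\<^esub> (a \<otimes>\<^bsub>Y\<^esub> b)" if g: "g \<in> carrier Y" for g
    proof -
      have "a \<otimes>\<^bsub>Y\<^esub> b \<otimes>\<^bsub>Y\<^esub> g = a \<otimes>\<^bsub>Y\<^esub> (g \<otimes>\<^bsub>Y\<^esub> b)" using ac bc g cc(2)[OF b g] by (simp add: Y.m_assoc)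
      also have "\<dots> = a \<otimes>\<^bsub>Y\<^esub> g \<otimes>\<^bsub>Y\<^esub> b" using ac bc g by (simp add: Y.m_assoc)
      also have "\<dots> = g \<otimes>\<^bsub>Y\<^esub> (a \<otimes>\<^bsub>Y\<^esub> b)" using ac bc g cc(2)[OF a g] by (simp add: Y.m_assoc)
      finally show ?thesis .
    qed
    moreover have "(a \<otimes>\<^bsub>Y\<^esub> b) [^]\<^bsub>Y\<^esub> (p ^ (k + l)) = \<one>\<^bsub>Y\<^esub>"
    proof -
      have "(a \<otimes>\<^bsub>Y\<^esub> b) [^]\<^bsub>Y\<^esub> (p ^ (k + l)) = a [^]\<^bsub>Y\<^esub> (p ^ k * p ^ l) \<otimes>\<^bsub>Y\<^esub> b [^]\<^bsub>Y\<^esub> (p ^ l * p ^ k)"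
        using Y.pow_mult_distrib[OF cc(2)[OF a bc] ac bc] by (simp add: power_add mult.commute)
      also have "\<dots> = \<one>\<^bsub>Y\<^esub>"
        using k l ac bc by (simp add: Y.nat_pow_pow[symmetric])
      finally show ?thesis .
    qed
    ultimately show "a \<otimes>\<^bsub>Y\<^esub> b \<in> ?P" unfolding center_p_part_def grp_center_def using ac bc by blast
  qed
  show ?thesis
    unfolding Y.normal_inv_iff
  proof (intro conjI ballI)
    show "subgroup ?P Y" by (rule sub)
    fix x h assume x: "x \<in> carrier Y" and h: "h \<in> ?P"
    have "x \<otimes>\<^bsub>Y\<^esub> h \<otimes>\<^bsub>Y\<^esub> inv\<^bsub>Y\<^esub> x = h \<otimes>\<^bsub>Y\<^esub> x \<otimes>\<^bsub>Y\<^esub> inv\<^bsub>Y\<^esub> x" using cc(2)[OF h x] by simp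
    also have "\<dots> = h" using x cc(1)[OF h] by (simp add: Y.m_assoc)
    finally show "x \<otimes>\<^bsub>Y\<^esub> h \<otimes>\<^bsub>Y\<^esub> inv\<^bsub>Y\<^esub> x \<in> ?P" using h by simp
  qed
qed

lemma cover_facts:
  assumes G: "group G" and U: "universal_p'_covering_group p G S"
  shows "finite (carrier G)" "derived G (carrier G) = carrier G"
proof -
  interpret G: group G by (rule G)
  obtain Y :: "nat monoid" where UY: "universal_covering_group Y S" and iso: "G \<cong> (Y Mod center_p_part p Y)"
    using U unfolding universal_p'_covering_group_def by blast
  have Yg: "group Y" and Yp: "derived Y (carrier Y) = carrier Y" and Yf: "finite (carrier Y)"
    using UY unfolding universal_covering_group_def perfect_group_def by auto
  interpret Y: group Y by (rule Yg)
  let ?P = "center_p_part p Y"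
  have nP: "?P \<lhd> Y" by (rule center_p_part_normal[OF Yg])
  obtain f where f: "f \<in> iso G (Y Mod ?P)" using iso unfolding is_iso_def by blast
  have fin_Q: "finite (carrier (Y Mod ?P))"
  proof -
    have "carrier (Y Mod ?P) \<subseteq> Pow (carrier Y)"
      unfolding FactGroup_def RCOSETS_def r_coset_def using nP normal_imp_subgroup subgroup.subset
      by fastforce
    then show ?thesis using Yf by (meson finite_Pow_iff finite_subset)
  qed
  have bij: "bij_betw f (carrier G) (carrier (Y Mod ?P))" using f unfolding iso_def by simp
  show "finite (carrier G)" using bij_betw_finite[OF bij] fin_Q by simp
  define g where "g = inv_into (carrier G) f"
  have gi: "g \<in> iso (Y Mod ?P) G" unfolding g_def using G.iso_set_sym[OF f] .
  define h where "h = g \<circ> (\<lambda>a. ?P #>\<^bsub>Y\<^esub> a)"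
  have hh: "h \<in> hom Y G" unfolding h_def
    using hom_compose[OF normal.r_coset_hom_Mod[OF nP]] gi unfolding iso_def by blast
  have "(\<lambda>a. ?P #>\<^bsub>Y\<^esub> a) ` carrier Y = carrier (Y Mod ?P)"
    unfolding FactGroup_def RCOSETS_def by auto
  moreover have "g ` carrier (Y Mod ?P) = carrier G" using gi unfolding iso_def bij_betw_def by simp
  moreover have "h ` carrier Y = g ` ((\<lambda>a. ?P #>\<^bsub>Y\<^esub> a) ` carrier Y)"
    unfolding h_def by (rule image_comp[symmetric])
  ultimately have hs: "h ` carrier Y = carrier G" by simp
  have gh: "group_hom Y G h" unfolding group_hom_def group_hom_axioms_def using Yg G hh by simp
  have "derived G (h ` carrier Y) = h ` derived Y (carrier Y)"
    using group_hom.derived_img[OF gh] by simp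
  then show "derived G (carrier G) = carrier G" using hs Yp by simp
qed

theorem lemma6p3:
  fixes p :: nat and S :: "'s monoid" and G :: "'a monoid" and \<chi> :: "'a \<Rightarrow> complex"
  assumes "prime p"
    and "simple_group S" and "finite (carrier S)" and "\<not> comm_group S"
    and "group G"
    and "universal_p'_covering_group p G S"
    and "irr_char G \<chi>"
  shows "let N = char_kernel G \<chi> \<inter> grp_center G; Gb = G Mod N in
    \<exists>(A :: nat monoid) \<iota> \<phi>. group A \<and> finite (carrier A) \<and>
       \<iota> \<in> mon Gb A \<and> \<iota> ` carrier Gb \<lhd> A \<and>
       \<phi> \<in> iso (A Mod grp_centralizer A (\<iota> ` carrier Gb)) (aut_stab G \<chi>) \<and>
       (\<forall>a \<in> carrier A. \<forall>g \<in> carrier G.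
          a \<otimes>\<^bsub>A\<^esub> \<iota> (N #>\<^bsub>G\<^esub> g) \<otimes>\<^bsub>A\<^esub> inv\<^bsub>A\<^esub> a
            = \<iota> (N #>\<^bsub>G\<^esub> (\<phi> (grp_centralizer A (\<iota> ` carrier Gb) #>\<^bsub>A\<^esub> a) g))) \<and>
       grp_centralizer A (\<iota> ` carrier Gb) = grp_center A \<and>
       (\<exists>\<psi>. irr_char A \<psi> \<and> (\<forall>g \<in> carrier G. \<psi> (\<iota> (N #>\<^bsub>G\<^esub> g)) = \<chi> g))"
proof -
  have fin: "finite (carrier G)" and perf: "derived G (carrier G) = carrier G"
    using cover_facts[OF assms(5,6)] by auto
  obtain n \<rho> where irr: "irreducible_rep G n \<rho>" and tr: "\<forall>g \<in> carrier G. \<chi> g = mat_trace (\<rho> g)"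
    using assms(7) unfolding irr_char_def by blast
  have Irr: "irrep G n \<rho> \<chi>" using assms(5) irr tr fin by (simp add: irrep_def irrep_axioms_def)
  interpret I: irrep G n \<rho> \<chi> by (rule Irr)
  obtain enc :: "(('a \<Rightarrow> 'a) \<times> complex mat) \<Rightarrow> nat" and m where "enc ` I.A0 = {i. i < m}" "inj_on enc I.A0"
    using finite_imp_inj_to_nat_seg[OF I.finite_A0] by blast
  have Mn: "main G n \<rho> \<chi> enc" using Irr perf \<open>inj_on enc I.A0\<close> by (simp add: main_def main_axioms_def)
  interpret M: main G n \<rho> \<chi> enc by (rule Mn)
  show ?thesis by (rule M.main_result)
qed


end
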